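(* Let $r\ge 2$ be an integer and let $\varphi$ be a discrete kernel and $\psi$ a continuous kernel such that conditions (i) and (ii) hold for this $r$, and both $\varphi$ and $\psi$ satisfy condition $(\Theta)$ with some $\theta>r+1$. Then there exists a constant $\Lambda_\infty>0$ such that for every $f\in C(\mathbb{R})$, \[ \|\mathcal{D}_w^{\varphi,\psi}f-f\|_\infty\le \Lambda_\infty\,\omega_r\!\left(f,\tfrac{1}{w}\right)_\infty,\qquad w>0. \]
   Context: $C(\mathbb{R})$ is the space of bounded, uniformly continuous functions $f:\mathbb{R}\to\mathbb{R}$ with the sup-norm $\|\cdot\|_\infty$. A discrete kernel is a bounded function $\varphi\in L^1(\mathbb{R})$ with $\sum_{k\in\mathbb{Z}}\varphi(u-k)=1$ for all $u\in\mathbb{R}$. A continuous kernel is a function $\psi\in L^1(\mathbb{R})$, bounded in a neighbourhood of $0$, with $\int_{\mathbb{R}}\psi(u)\,du=1$. Moments: - discrete algebraic moments: $m_\nu(\varphi,u)=\sum_{k\in\mathbb{Z}}\varphi(u-k)(k-u)^\nu$; - continuous algebraic moments: $\widetilde m_\nu(\psi)=\int_{\mathbb{R}}u^\nu\psi(u)\,du$. Durrmeyer sampling operators: \[ (\mathcal{D}_w^{\varphi,\psi}f)(x)=\sum_{k\in\mathbb{Z}}\varphi(wx-k)\,w\int_{\mathbb{R}}\psi(wu-k)f(u)\,du,\qquad x\in\mathbb{R},\ w>0. \] Conditions: - (i): for every $\nu=1,\dots,r$, $m_\nu(\varphi,u)$ is independent of $u\in\mathbb{R}$; it is then written $m_\nu(\varphi)$,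 and $m_0(\varphi)=1$. - (ii): for every $i=1,\dots,r-1$, $\sum_{\nu=0}^{i}\binom{i}{\nu}m_{i-\nu}(\varphi)\widetilde m_\nu(\psi)=0$. - $(\Theta)$ with $\theta>0$: a function $\xi$ satisfies it if $\xi(u)=\mathcal{O}(|u|^{-\theta})$ as $|u|\to+\infty$. The $r$-th order modulus of smoothness is $\omega_r(f,\delta)_p=\sup_{|t|\le\delta}\|\Delta_t^r(f,\cdot)\|_p$, where $\Delta_t^r(f,x)=\sum_{j=0}^r\binom{r}{j}(-1)^{r-j}f(x+jt)$. *)

theory Defs
  imports "HOL-Analysis.Analysis"
begin

text \<open>C(R): bounded, uniformly continuous real functions.\<close>
definition bucont :: "(real \<Rightarrow> real) set" where
  "bucont = {f. bounded (range f) \<and> uniformly_continuous_on UNIV f}"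

definition sup_norm :: "(real \<Rightarrow> real) \<Rightarrow> real" where
  "sup_norm g = (SUP x. \<bar>g x\<bar>)"

definition discrete_kernel :: "(real \<Rightarrow> real) \<Rightarrow> bool" where
  "discrete_kernel \<phi> \<longleftrightarrow> bounded (range \<phi>) \<and> integrable lborel \<phi> \<and>
     (\<forall>u. ((\<lambda>k::int. \<phi> (u - of_int k)) has_sum 1) UNIV)"

definition continuous_kernel :: "(real \<Rightarrow> real) \<Rightarrow> bool" where
  "continuous_kernel \<psi> \<longleftrightarrow> integrable lborel \<psi> \<and>
     (\<exists>\<delta>>0. \<exists>M. \<forall>u. \<bar>u\<bar> < \<delta> \<longrightarrow> \<bar>\<psi> u\<bar> \<le> M) \<and>
     (LINT u|lborel. \<psi> u) = 1"

definition disc_moment :: "(real \<Rightarrow> real) \<Rightarrow> nat \<Rightarrow> real \<Rightarrow> real" where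
  "disc_moment \<phi> \<nu> u = (\<Sum>\<^sub>\<infinity>k::int. \<phi> (u - of_int k) * (of_int k - u) ^ \<nu>)"

definition cont_moment :: "(real \<Rightarrow> real) \<Rightarrow> nat \<Rightarrow> real" where
  "cont_moment \<psi> \<nu> = (LINT u|lborel. u ^ \<nu> * \<psi> u)"

definition cond_i :: "nat \<Rightarrow> (real \<Rightarrow> real) \<Rightarrow> bool" where
  "cond_i r \<phi> \<longleftrightarrow> (\<forall>\<nu>\<in>{1..r}. \<forall>u. disc_moment \<phi> \<nu> u = disc_moment \<phi> \<nu> 0)"

definition disc_moment_const :: "(real \<Rightarrow> real) \<Rightarrow> nat \<Rightarrow> real" where
  "disc_moment_const \<phi> \<nu> = (if \<nu> = 0 then 1 else disc_moment \<phi> \<nu> 0)"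

definition cond_ii :: "nat \<Rightarrow> (real \<Rightarrow> real) \<Rightarrow> (real \<Rightarrow> real) \<Rightarrow> bool" where
  "cond_ii r \<phi> \<psi> \<longleftrightarrow> (\<forall>i\<in>{1..r-1}.
     (\<Sum>\<nu>=0..i. real (i choose \<nu>) * disc_moment_const \<phi> (i - \<nu>) * cont_moment \<psi> \<nu>) = 0)"

definition cond_Theta :: "real \<Rightarrow> (real \<Rightarrow> real) \<Rightarrow> bool" where
  "cond_Theta \<theta> \<xi> \<longleftrightarrow> (\<exists>C M. \<forall>u. \<bar>u\<bar> > M \<longrightarrow> \<bar>\<xi> u\<bar> \<le> C * \<bar>u\<bar> powr (- \<theta>))"

definition durrmeyer :: "(real \<Rightarrow> real) \<Rightarrow> (real \<Rightarrow> real) \<Rightarrow> real \<Rightarrow> (real \<Rightarrow> real) \<Rightarrow> real \<Rightarrow> real" where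
  "durrmeyer \<phi> \<psi> w f x =
     (\<Sum>\<^sub>\<infinity>k::int. \<phi> (w * x - of_int k) * (w * (LINT u|lborel. \<psi> (w * u - of_int k) * f u)))"

definition fdiff :: "nat \<Rightarrow> real \<Rightarrow> (real \<Rightarrow> real) \<Rightarrow> real \<Rightarrow> real" where
  "fdiff r t f x = (\<Sum>j=0..r. real (r choose j) * (-1) ^ (r - j) * f (x + real j * t))"

definition modsmooth :: "nat \<Rightarrow> (real \<Rightarrow> real) \<Rightarrow> real \<Rightarrow> real" where
  "modsmooth r f \<delta> = (SUP t\<in>{t. \<bar>t\<bar> \<le> \<delta>}. sup_norm (fdiff r t f))"

end

theory Submission
  imports Defs "HOL-Real_Asymp.Real_Asymp"
begin


lemma fdiff_Suc:
  "fdiff (Suc n) t F x = fdiff n t F (x + t) - fdiff n t F x"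
proof -
  have A: "fdiff n t F (x + t) = (\<Sum>j=1..Suc n. real (n choose (j - 1)) * (-1) ^ (Suc n - j) * F (x + real j * t))"
    unfolding fdiff_def
    by (rule sum.reindex_bij_witness[where i="\<lambda>j. j - 1" and j="\<lambda>j. Suc j"])
       (auto simp: algebra_simps)
  have B: "fdiff n t F x = (\<Sum>j=0..n. real (n choose j) * (-1) ^ (n - j) * F (x + real j * t))"
    unfolding fdiff_def ..
  have "fdiff (Suc n) t F x = (\<Sum>j=0..Suc n. (real (n choose (j - 1)) * (if j = 0 then 0 else 1) + real (n choose j)) * (-1) ^ (Suc n - j) * F (x + real j * t))"
    unfolding fdiff_def
  proof (rule sum.cong[OF refl])
    fix j assume "j \<in> {0..Suc n}"
    show "real (Suc n choose j) * (-1) ^ (Suc n - j) * F (x + real j * t) =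
      (real (n choose (j - 1)) * (if j = 0 then 0 else 1) + real (n choose j)) * (-1) ^ (Suc n - j) * F (x + real j * t)"
      by (cases j) (auto simp: binomial_Suc_Suc)
  qed
  also have "\<dots> = (\<Sum>j=0..Suc n. real (n choose (j - 1)) * (if j = 0 then 0 else 1) * (-1) ^ (Suc n - j) * F (x + real j * t))
     + (\<Sum>j=0..Suc n. real (n choose j) * (-1) ^ (Suc n - j) * F (x + real j * t))"
    by (simp add: sum.distrib algebra_simps)
  also have "(\<Sum>j=0..Suc n. real (n choose (j - 1)) * (if j = 0 then 0 else 1) * (-1) ^ (Suc n - j) * F (x + real j * t))
     = fdiff n t F (x + t)"
    unfolding A by (simp add: sum.atLeast_Suc_atMost)
  also have "(\<Sum>j=0..Suc n. real (n choose j) * (-1) ^ (Suc n - j) * F (x + real j * t))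
     = - fdiff n t F x"
  proof -
    have "(\<Sum>j=0..Suc n. real (n choose j) * (-1) ^ (Suc n - j) * F (x + real j * t))
       = (\<Sum>j=0..n. real (n choose j) * (-1) ^ (Suc n - j) * F (x + real j * t))"
      by simp
    also have "\<dots> = (\<Sum>j=0..n. - (real (n choose j) * (-1) ^ (n - j) * F (x + real j * t)))"
      by (rule sum.cong) (auto simp: Suc_diff_le)
    finally show ?thesis unfolding B by (simp add: sum_negf)
  qed
  finally show ?thesis by simp
qed

definition Av :: "real \<Rightarrow> (real \<Rightarrow> real) \<Rightarrow> real \<Rightarrow> real" where
  "Av s G y = integral {0..1} (\<lambda>\<tau>. G (y + s * \<tau>))"

definition Dv :: "real \<Rightarrow> (real \<Rightarrow> real) \<Rightarrow> real \<Rightarrow> real" where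
  "Dv s G y = (G (y + s) - G y) / s"

lemma cont_comp_affine:
  fixes G :: "real \<Rightarrow> real" and A :: "real set"
  assumes "continuous_on UNIV G"
  shows "continuous_on A (\<lambda>\<tau>. G (y + s * \<tau>))"
  by (rule continuous_on_compose2[OF assms]) (auto intro!: continuous_intros)

lemma Av_eq:
  assumes s: "s > 0" and G: "continuous_on UNIV G"
  shows "Av s G y = integral {y..y+s} G / s"
proof -
  have "(G has_integral integral {y..y+s} G) (cbox y (y+s))"
    using G by (auto intro!: integrable_integral integrable_continuous_interval continuous_on_subset[OF G])
  from has_integral_affinity'[OF this s, of y]
  have "((\<lambda>\<tau>. G (s * \<tau> + y)) has_integral integral {y..y+s} G / s) {0..1}"
    using s by (simp add: divide_simps)
  then show ?thesis unfolding Av_def by (simp add: integral_unique add.commute)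
qed

lemma Av_deriv:
  assumes s: "s > 0" and G: "continuous_on UNIV G"
  shows "(Av s G has_real_derivative Dv s G y0) (at y0)"
proof -
  define a where "a = y0 - 1"
  define b where "b = y0 + s + 1"
  define I where "I u = integral {a..u} G" for u
  have Gab: "continuous_on {a..b} G" using continuous_on_subset[OF G] by auto
  have dI: "(I has_real_derivative G u) (at u)" if "u \<in> {a<..<b}" for u
  proof -
    have "(I has_real_derivative G u) (at u within {a..b})"
      unfolding I_def using that by (intro integral_has_real_derivative[OF Gab]) auto
    then have "(I has_real_derivative G u) (at u within {a<..<b})"
      by (rule DERIV_subset) auto
    then show ?thesis using that at_within_open[of u "{a<..<b}"] by simp
  qed
  have e1: "((\<lambda>y. y + s) has_real_derivative 1) (at y0)"
    by (rule derivative_eq_intros refl)+ simp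
  have d1: "((\<lambda>y. I (y + s)) has_real_derivative G (y0 + s) * 1) (at y0)"
    by (rule DERIV_chain2[OF dI e1]) (use s in \<open>simp add: a_def b_def\<close>)
  have d2: "(I has_real_derivative G y0) (at y0)"
    using s by (intro dI) (auto simp: a_def b_def)
  have d: "((\<lambda>y. (I (y + s) - I y) / s) has_real_derivative (G (y0 + s) * 1 - G y0) / s) (at y0)"
    by (intro DERIV_cdivide DERIV_diff d1 d2)
  have d': "((\<lambda>y. (I (y + s) - I y) / s) has_real_derivative Dv s G y0) (at y0)"
    using d by (simp add: Dv_def)
  show ?thesis
  proof (rule has_field_derivative_transform_within_open[OF d', of "{y0-1<..<y0+1}"])
    fix y assume y: "y \<in> {y0-1<..<y0+1}"
    have "integral {a..y} G + integral {y..y+s} G = integral {a..y+s} G"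
    proof (rule Henstock_Kurzweil_Integration.integral_combine)
      show "G integrable_on {a..y + s}"
        by (intro integrable_continuous_interval continuous_on_subset[OF G]) auto
    qed (use y s in \<open>auto simp: a_def\<close>)
    then show "(I (y + s) - I y) / s = Av s G y"
      using Av_eq[OF s G, of y] by (simp add: I_def)
  qed auto
qed

lemma Av_cont:
  assumes s: "s > 0" and G: "continuous_on UNIV G"
  shows "continuous_on UNIV (Av s G)"
  using Av_deriv[OF assms] by (meson DERIV_isCont continuous_at_imp_continuous_on)

lemma Av_pow_cont:
  assumes s: "s > 0" and G: "continuous_on UNIV G"
  shows "continuous_on UNIV ((Av s ^^ n) G)"
  by (induction n) (auto intro: Av_cont[OF s] G)

lemma Dv_pow_deriv:
  assumes "\<And>y. (H has_real_derivative H' y) (at y)"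
  shows "((Dv s ^^ m) H has_real_derivative (Dv s ^^ m) H' y) (at y)"
proof (induction m arbitrary: y)
  case 0 then show ?case using assms by simp
next
  case (Suc m)
  have e1: "((\<lambda>y. y + s) has_real_derivative 1) (at y)"
    by (rule derivative_eq_intros refl)+ simp
  have d1: "((\<lambda>y. (Dv s ^^ m) H (y + s)) has_real_derivative (Dv s ^^ m) H' (y + s) * 1) (at y)"
    by (rule DERIV_chain2[OF Suc.IH e1])
  have "((\<lambda>y. ((Dv s ^^ m) H (y + s) - (Dv s ^^ m) H y) / s) has_real_derivative
        ((Dv s ^^ m) H' (y + s) * 1 - (Dv s ^^ m) H' y) / s) (at y)"
    by (intro DERIV_cdivide DERIV_diff d1 Suc.IH)
  moreover have "(Dv s ^^ Suc m) H = (\<lambda>y. ((Dv s ^^ m) H (y + s) - (Dv s ^^ m) H y) / s)"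
    by (simp add: Dv_def fun_eq_iff)
  moreover have "(Dv s ^^ Suc m) H' y = ((Dv s ^^ m) H' (y + s) * 1 - (Dv s ^^ m) H' y) / s"
    by (simp add: Dv_def)
  ultimately show ?case by simp
qed

lemma Dv_pow_eq:
  assumes "s \<noteq> 0"
  shows "(Dv s ^^ n) F z = fdiff n s F z / s ^ n"
proof (induction n arbitrary: z)
  case 0 then show ?case by (simp add: fdiff_def)
next
  case (Suc n)
  have "(Dv s ^^ Suc n) F z = ((Dv s ^^ n) F (z + s) - (Dv s ^^ n) F z) / s"
    by (simp add: Dv_def)
  also have "\<dots> = (fdiff n s F (z + s) / s ^ n - fdiff n s F z / s ^ n) / s"
    by (simp only: Suc.IH)
  also have "\<dots> = fdiff (Suc n) s F z / s ^ Suc n"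
    using assms by (simp add: fdiff_Suc diff_divide_distrib mult.commute)
  finally show ?case .
qed

lemma Av_pow_bound:
  assumes s: "s > 0" and G: "continuous_on UNIV G"
    and M: "\<And>z. z \<in> {y..y + real n * s} \<Longrightarrow> \<bar>G z\<bar> \<le> M"
  shows "\<bar>(Av s ^^ n) G y\<bar> \<le> M"
  using M
proof (induction n arbitrary: y)
  case 0 then show ?case by auto
next
  case (Suc n)
  have "\<bar>(Av s ^^ n) G (y + s * \<tau>)\<bar> \<le> M" if "\<tau> \<in> {0..1}" for \<tau>
  proof (rule Suc.IH)
    fix z assume "z \<in> {y + s * \<tau>..y + s * \<tau> + real n * s}"
    moreover have "s * \<tau> \<le> s" "0 \<le> s * \<tau>" using that s by (auto simp: mult_left_le)
    ultimately show "\<bar>G z\<bar> \<le> M" by (intro Suc.prems) (auto simp: algebra_simps)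
  qed
  then have "norm (integral {0..1} (\<lambda>\<tau>. (Av s ^^ n) G (y + s * \<tau>))) \<le> M * (1 - 0)"
    by (intro integral_bound cont_comp_affine Av_pow_cont[OF s G]) auto
  then show ?case using Av_def[of s "(Av s ^^ n) G" y] by simp
qed

lemma Av_shift:
  "((Av (j * s)) ^^ n) F (x + j * y) = ((Av s) ^^ n) (\<lambda>z. F (x + j * z)) y"
proof (induction n arbitrary: y)
  case 0 then show ?case by simp
next
  case (Suc n)
  have "((Av (j * s)) ^^ Suc n) F (x + j * y) = Av (j * s) ((Av (j * s) ^^ n) F) (x + j * y)" by simp
  also have "\<dots> = integral {0..1} (\<lambda>\<tau>. ((Av (j * s)) ^^ n) F (x + j * (y + s * \<tau>)))"
    by (simp only: Av_def) (simp add: algebra_simps)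
  also have "\<dots> = integral {0..1} (\<lambda>\<tau>. ((Av s) ^^ n) (\<lambda>z. F (x + j * z)) (y + s * \<tau>))"
    by (simp only: Suc.IH)
  also have "\<dots> = Av s ((Av s ^^ n) (\<lambda>z. F (x + j * z))) y" by (simp only: Av_def)
  finally show ?case by simp
qed

lemma Av_pow_lin:
  assumes s: "s > 0" and J: "finite J" and G: "\<And>j. j \<in> J \<Longrightarrow> continuous_on UNIV (G j)"
  shows "(Av s ^^ n) (\<lambda>z. \<Sum>j\<in>J. c j * G j z) y = (\<Sum>j\<in>J. c j * (Av s ^^ n) (G j) y)"
proof (induction n arbitrary: y)
  case 0 then show ?case by simp
next
  case (Suc n)
  have "(Av s ^^ Suc n) (\<lambda>z. \<Sum>j\<in>J. c j * G j z) y = Av s (\<lambda>z. \<Sum>j\<in>J. c j * (Av s ^^ n) (G j) z) y"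
  proof -
    have "(Av s ^^ n) (\<lambda>z. \<Sum>j\<in>J. c j * G j z) = (\<lambda>z. \<Sum>j\<in>J. c j * (Av s ^^ n) (G j) z)"
      by (rule ext) (rule Suc.IH)
    then show ?thesis by simp
  qed
  also have "\<dots> = integral {0..1} (\<lambda>\<tau>. \<Sum>j\<in>J. c j * (Av s ^^ n) (G j) (y + s * \<tau>))"
    by (rule Av_def)
  also have "\<dots> = (\<Sum>j\<in>J. integral {0..1} (\<lambda>\<tau>. c j * (Av s ^^ n) (G j) (y + s * \<tau>)))"
  proof (rule integral_sum[OF J])
    fix j assume j: "j \<in> J"
    show "(\<lambda>\<tau>. c j * (Av s ^^ n) (G j) (y + s * \<tau>)) integrable_on {0..1}"
      by (intro integrable_continuous_interval continuous_intros cont_comp_affine Av_pow_cont[OF s G[OF j]])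
  qed
  also have "\<dots> = (\<Sum>j\<in>J. c j * (Av s ^^ Suc n) (G j) y)"
  proof (rule sum.cong[OF refl])
    fix j assume j: "j \<in> J"
    have "(Av s ^^ Suc n) (G j) y = integral {0..1} (\<lambda>\<tau>. (Av s ^^ n) (G j) (y + s * \<tau>))"
      using Av_def[of s "(Av s ^^ n) (G j)" y] by simp
    then show "integral {0..1} (\<lambda>\<tau>. c j * (Av s ^^ n) (G j) (y + s * \<tau>)) = c j * (Av s ^^ Suc n) (G j) y"
      by (simp only: integral_mult_right)
  qed
  finally show ?case .
qed

lemma fdiff_cont_t:
  assumes "continuous_on UNIV f"
  shows "continuous_on UNIV (\<lambda>t. fdiff r t f x)"
  unfolding fdiff_def
  by (intro continuous_intros continuous_on_compose2[OF assms]) auto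

lemma smoothing_error:
  assumes s: "s > 0" and f: "continuous_on UNIV f"
    and W: "\<And>t. t \<in> {0..real r * s} \<Longrightarrow> \<bar>fdiff r t f x\<bar> \<le> W"
  shows "\<bar>\<Sum>j=0..r. real (r choose j) * (-1) ^ (r - j) * (Av (real j * s) ^^ r) f x\<bar> \<le> W"
proof -
  have "(\<Sum>j=0..r. real (r choose j) * (-1) ^ (r - j) * (Av (real j * s) ^^ r) f x)
      = (\<Sum>j=0..r. real (r choose j) * (-1) ^ (r - j) * (Av s ^^ r) (\<lambda>z. f (x + real j * z)) 0)"
  proof (rule sum.cong[OF refl])
    fix j assume "j \<in> {0..r}"
    show "real (r choose j) * (-1) ^ (r - j) * (Av (real j * s) ^^ r) f x
      = real (r choose j) * (-1) ^ (r - j) * (Av s ^^ r) (\<lambda>z. f (x + real j * z)) 0"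
      using Av_shift[where j="real j" and s=s and n=r and F=f and x=x and y=0] by simp
  qed
  also have "\<dots> = (Av s ^^ r) (\<lambda>z. \<Sum>j=0..r. (real (r choose j) * (-1) ^ (r - j)) * f (x + real j * z)) 0"
    by (subst Av_pow_lin[OF s]) (auto intro!: continuous_on_compose2[OF f] continuous_intros)
  also have "\<dots> = (Av s ^^ r) (\<lambda>z. fdiff r z f x) 0"
    unfolding fdiff_def by simp
  finally show ?thesis
    using Av_pow_bound[OF s fdiff_cont_t[OF f], where y=0 and n=r and M=W] W by simp
qed

lemma Av_pow_deriv_chain:
  assumes s: "s > 0" and f: "continuous_on UNIV f" and m: "m < r"
  shows "((Dv s ^^ m) ((Av s ^^ (r - m)) f) has_real_derivative
          (Dv s ^^ Suc m) ((Av s ^^ (r - Suc m)) f) t) (at t)"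
proof -
  have eq: "(Av s ^^ (r - m)) f = Av s ((Av s ^^ (r - Suc m)) f)"
    using m by (metis Suc_diff_Suc comp_apply funpow.simps(2))
  have "\<And>y. ((Av s ^^ (r - m)) f has_real_derivative Dv s ((Av s ^^ (r - Suc m)) f) y) (at y)"
    unfolding eq by (rule Av_deriv[OF s Av_pow_cont[OF s f]])
  from Dv_pow_deriv[OF this, where s=s and m=m and y=t]
  show ?thesis by (simp add: funpow_Suc_right del: funpow.simps)
qed

lemma taylor_decomp:
  assumes s: "s > 0" and f: "continuous_on UNIV f" and r: "r > 0"
    and K: "\<And>t. \<bar>fdiff r s f t\<bar> \<le> K"
  shows "\<bar>(Av s ^^ r) f u - (\<Sum>m<r. (Dv s ^^ m) ((Av s ^^ (r - m)) f) x / fact m * (u - x) ^ m)\<bar>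
           \<le> K / s ^ r / fact r * \<bar>u - x\<bar> ^ r"
proof (cases "u = x")
  case True
  have "(\<Sum>m<r. (Dv s ^^ m) ((Av s ^^ (r - m)) f) x / fact m * (u - x) ^ m) = (Av s ^^ r) f x"
    using r True by (simp add: sum.lessThan_Suc_shift[of _ "r - 1", simplified] zero_power)
  then show ?thesis using True r by (simp add: zero_power)
next
  case False
  define dd where "dd m = (Dv s ^^ m) ((Av s ^^ (r - m)) f)" for m
  have "\<exists>t. (if u < x then u < t \<and> t < x else x < t \<and> t < u) \<and>
    (Av s ^^ r) f u = (\<Sum>m<r. (dd m x / fact m) * (u - x)^m) + (dd r t / fact r) * (u - x)^r"
  proof (rule Taylor[where a="min u x" and b="max u x"])
    show "dd 0 = (Av s ^^ r) f" by (simp add: dd_def)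
    show "\<forall>m t. m < r \<and> min u x \<le> t \<and> t \<le> max u x \<longrightarrow> (dd m has_real_derivative dd (Suc m) t) (at t)"
      unfolding dd_def using Av_pow_deriv_chain[OF s f] by blast
  qed (use r False in auto)
  then obtain t where t: "(Av s ^^ r) f u = (\<Sum>m<r. (dd m x / fact m) * (u - x)^m) + (dd r t / fact r) * (u - x)^r"
    by blast
  have "dd r t = fdiff r s f t / s ^ r" unfolding dd_def using Dv_pow_eq[of s r f t] s by simp
  then have "\<bar>dd r t\<bar> \<le> K / s ^ r" using K[of t] s by (simp add: abs_div divide_right_mono)
  then have "\<bar>(dd r t / fact r) * (u - x)^r\<bar> \<le> K / s ^ r / fact r * \<bar>u - x\<bar> ^ r"
  proof -
    have "\<bar>dd r t\<bar> * \<bar>u - x\<bar> ^ r \<le> K / s ^ r * \<bar>u - x\<bar> ^ r"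
      by (rule mult_right_mono[OF \<open>\<bar>dd r t\<bar> \<le> K / s ^ r\<close>]) simp
    then have "\<bar>dd r t\<bar> * \<bar>u - x\<bar> ^ r / fact r \<le> K / s ^ r * \<bar>u - x\<bar> ^ r / fact r"
      by (rule divide_right_mono) simp
    then show ?thesis by (simp add: abs_mult power_abs field_simps)
  qed
  then show ?thesis using t by (simp add: dd_def)
qed

lemma Av_zero: "Av 0 G = G"
  by (rule ext) (simp add: Av_def)

lemma Av_zero_pow: "(Av 0 ^^ n) G = G"
  by (induction n) (simp_all add: Av_zero)



lemma E_half_integrable:
  fixes \<alpha> :: real assumes a: "\<alpha> > 1"
  shows "set_integrable lborel {0<..} (\<lambda>v. (1 + v) powr (-\<alpha>))"
proof -
  define F where "F v = -((1 + v) powr (1 - \<alpha>)) / (\<alpha> - 1)" for v :: real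
  have "set_integrable lborel (einterval 0 \<infinity>) (\<lambda>v. (1 + v) powr (-\<alpha>))"
  proof (rule interval_integral_FTC_nonneg[where F=F and A="F 0" and B=0])
    fix x assume x: "0 < ereal x" "ereal x < \<infinity>"
    then have "x > 0" by simp
    have e1: "((\<lambda>v. 1 + v) has_real_derivative 1) (at x)"
      by (rule derivative_eq_intros refl)+ simp
    have "((\<lambda>v. (1 + v) powr (1 - \<alpha>)) has_real_derivative (1 - \<alpha>) * (1 + x) powr (1 - \<alpha> - 1) * 1) (at x)"
      by (rule DERIV_chain2[OF has_real_derivative_powr e1]) (use \<open>x > 0\<close> in simp)
    then have "((\<lambda>v. (1 + v) powr (1 - \<alpha>)) has_real_derivative (1 - \<alpha>) * (1 + x) powr (- \<alpha>)) (at x)"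
      by simp
    from DERIV_cdivide[OF DERIV_minus[OF this], of "\<alpha> - 1"]
    have d: "(F has_real_derivative (- ((1 - \<alpha>) * (1 + x) powr (- \<alpha>))) / (\<alpha> - 1)) (at x)"
      unfolding F_def by simp
    have "(- ((1 - \<alpha>) * (1 + x) powr (- \<alpha>))) / (\<alpha> - 1) = (1 + x) powr (- \<alpha>)"
      using a by (simp add: field_simps)
    with d show "(F has_real_derivative (1 + x) powr (- \<alpha>)) (at x)" by simp
    show "isCont (\<lambda>v. (1 + v) powr (- \<alpha>)) x"
      using \<open>x > 0\<close> by (intro continuous_intros) auto
  next
    show "((F \<circ> real_of_ereal) \<longlongrightarrow> F 0) (at_right 0)"
      unfolding zero_ereal_def ereal_tendsto_simps1 F_def
      using a by (intro tendsto_intros) auto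
    show "((F \<circ> real_of_ereal) \<longlongrightarrow> 0) (at_left \<infinity>)"
      unfolding ereal_tendsto_simps1 F_def using a by real_asymp
  qed (auto simp: zero_ereal_def)
  then show ?thesis by (simp add: zero_ereal_def)
qed

lemma E_integrable:
  fixes \<alpha> :: real assumes a: "\<alpha> > 1"
  shows "integrable lborel (\<lambda>v. (1 + \<bar>v\<bar>) powr (-\<alpha>))"
proof -
  define g where "g v = indicator {0<..} v * (1 + v) powr (-\<alpha>)" for v :: real
  have g: "integrable lborel g"
    using E_half_integrable[OF a] unfolding set_integrable_def g_def by simp
  have g2: "integrable lborel (\<lambda>v. g (0 + (-1) * v))"
    by (rule lborel_integrable_real_affine[OF g]) simp
  have i: "integrable lborel (\<lambda>v. 1 * indicator {-1..1::real} v :: real)"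
    using borel_integrable_atLeastAtMost[of "-1" 1 "\<lambda>_. 1::real"] by simp
  show ?thesis
  proof (rule Bochner_Integration.integrable_bound[OF Bochner_Integration.integrable_add[OF Bochner_Integration.integrable_add[OF g g2] i]])
    show "(\<lambda>v. (1 + \<bar>v\<bar>) powr - \<alpha>) \<in> borel_measurable lborel" by measurable
    show "AE v in lborel. norm ((1 + \<bar>v\<bar>) powr - \<alpha>) \<le> norm (g v + g (0 + - 1 * v) + 1 * indicator {- 1..1} v)"
    proof (rule AE_I2)
      fix v :: real
      show "norm ((1 + \<bar>v\<bar>) powr - \<alpha>) \<le> norm (g v + g (0 + - 1 * v) + 1 * indicator {- 1..1} v)"
      proof (cases v "0::real" rule: linorder_cases)
        case less
        then show ?thesis by (simp add: g_def indicator_def)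
      next
        case equal
        then show ?thesis by (simp add: g_def indicator_def)
      next
        case greater
        then show ?thesis by (simp add: g_def indicator_def)
      qed
    qed
  qed
qed

lemma powr_neg_shift_le:
  fixes a \<beta> :: real assumes "a \<ge> 1" "\<beta> \<ge> 0"
  shows "a powr (-\<beta>) \<le> 2 powr \<beta> * (1 + a) powr (-\<beta>)"
proof -
  have "(2 * a) powr (-\<beta>) \<le> (1 + a) powr (-\<beta>)"
    using assms by (intro powr_mono2') auto
  then have "2 powr (-\<beta>) * a powr (-\<beta>) \<le> (1 + a) powr (-\<beta>)"
    by (simp add: powr_mult)
  then have "2 powr \<beta> * (2 powr (-\<beta>) * a powr (-\<beta>)) \<le> 2 powr \<beta> * (1 + a) powr (-\<beta>)"
    by (intro mult_left_mono) auto
  moreover have "2 powr \<beta> * (2 powr (-\<beta>) * a powr (-\<beta>)) = a powr (-\<beta>)"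
    by (simp add: powr_minus)
  ultimately show ?thesis by simp
qed

lemma theta_tail:
  assumes Th: "cond_Theta \<theta> \<xi>" and tr: "\<theta> > real r"
  obtains C M where "M \<ge> 1" "C \<ge> 0"
    "\<And>v. \<bar>v\<bar> > M \<Longrightarrow> \<bar>\<xi> v\<bar> * (1 + \<bar>v\<bar>) ^ r \<le> C * (1 + \<bar>v\<bar>) powr (-(\<theta> - real r))"
proof -
  from Th obtain C0 M0 where h: "\<And>u. \<bar>u\<bar> > M0 \<Longrightarrow> \<bar>\<xi> u\<bar> \<le> C0 * \<bar>u\<bar> powr (- \<theta>)"
    unfolding cond_Theta_def by blast
  define C1 where "C1 = max C0 0"
  define \<beta> where "\<beta> = \<theta> - real r"
  have b: "\<beta> > 0" using tr by (simp add: \<beta>_def)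
  show ?thesis
  proof (rule that[of "max M0 1" "C1 * 2 ^ r * 2 powr \<beta>"])
    fix v :: real assume v: "\<bar>v\<bar> > max M0 1"
    define a where "a = \<bar>v\<bar>"
    have a1: "a > 1" using v by (simp add: a_def)
    have xi: "\<bar>\<xi> v\<bar> \<le> C1 * a powr (- \<theta>)"
    proof -
      have "\<bar>\<xi> v\<bar> \<le> C0 * a powr (- \<theta>)" using h[of v] v unfolding a_def by simp
      also have "\<dots> \<le> C1 * a powr (- \<theta>)" unfolding C1_def by (intro mult_right_mono) auto
      finally show ?thesis .
    qed
    have p: "(1 + a) ^ r \<le> 2 ^ r * a ^ r"
    proof -
      have "(1 + a) ^ r \<le> (2 * a) ^ r" by (rule power_mono) (use a1 in auto)
      then show ?thesis by (simp add: power_mult_distrib)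
    qed
    have "\<bar>\<xi> v\<bar> * (1 + a) ^ r \<le> C1 * a powr (- \<theta>) * (2 ^ r * a ^ r)"
      using xi p a1 by (intro mult_mono) (auto simp: C1_def)
    also have "a powr (- \<theta>) * a ^ r = a powr (- \<beta>)"
      using a1 by (simp add: \<beta>_def powr_realpow[symmetric] powr_add[symmetric])
    then have "C1 * a powr (- \<theta>) * (2 ^ r * a ^ r) = C1 * 2 ^ r * a powr (- \<beta>)"
      by (simp add: algebra_simps)
    also have "\<dots> \<le> C1 * 2 ^ r * (2 powr \<beta> * (1 + a) powr (-\<beta>))"
      using powr_neg_shift_le[of a \<beta>] a1 b by (intro mult_left_mono) (auto simp: C1_def)
    finally show "\<bar>\<xi> v\<bar> * (1 + \<bar>v\<bar>) ^ r \<le> C1 * 2 ^ r * 2 powr \<beta> * (1 + \<bar>v\<bar>) powr (-(\<theta> - real r))"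
      by (simp add: a_def \<beta>_def mult_ac)
  qed (auto simp: C1_def)
qed

lemma theta_global:
  assumes Th: "cond_Theta \<theta> \<xi>" and tr: "\<theta> > real r" and B: "\<And>v. \<bar>\<xi> v\<bar> \<le> B"
  obtains C where "C \<ge> 0"
    "\<And>v. \<bar>\<xi> v\<bar> * (1 + \<bar>v\<bar>) ^ r \<le> C * (1 + \<bar>v\<bar>) powr (-(\<theta> - real r))"
proof -
  obtain M C1 where M: "M \<ge> 1" "C1 \<ge> 0"
    "\<And>v. \<bar>v\<bar> > M \<Longrightarrow> \<bar>\<xi> v\<bar> * (1 + \<bar>v\<bar>) ^ r \<le> C1 * (1 + \<bar>v\<bar>) powr (-(\<theta> - real r))"
    by (rule theta_tail[OF Th tr]) auto
  define \<beta> where "\<beta> = \<theta> - real r"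
  have b: "\<beta> > 0" using tr by (simp add: \<beta>_def)
  define C2 where "C2 = max B 0 * (1 + M) ^ r * (1 + M) powr \<beta>"
  show ?thesis
  proof (rule that[of "max C1 C2"])
    fix v :: real
    show "\<bar>\<xi> v\<bar> * (1 + \<bar>v\<bar>) ^ r \<le> max C1 C2 * (1 + \<bar>v\<bar>) powr (-(\<theta> - real r))"
    proof (cases "\<bar>v\<bar> > M")
      case True
      then have "\<bar>\<xi> v\<bar> * (1 + \<bar>v\<bar>) ^ r \<le> C1 * (1 + \<bar>v\<bar>) powr (-(\<theta> - real r))" using M by blast
      also have "\<dots> \<le> max C1 C2 * (1 + \<bar>v\<bar>) powr (-(\<theta> - real r))"
        by (intro mult_right_mono) auto
      finally show ?thesis .
    next
      case False
      have x1: "\<bar>\<xi> v\<bar> \<le> max B 0" using B[of v] by simp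
      have x2: "(1 + \<bar>v\<bar>) ^ r \<le> (1 + M) ^ r" by (rule power_mono) (use False in auto)
      have c1: "\<bar>\<xi> v\<bar> * (1 + \<bar>v\<bar>) ^ r \<le> max B 0 * (1 + M) ^ r"
        by (rule mult_mono[OF x1 x2]) auto
      have m: "(1 + M) powr (- \<beta>) \<le> (1 + \<bar>v\<bar>) powr (- \<beta>)"
        using False b by (intro powr_mono2') auto
      have "1 = (1 + M) powr \<beta> * (1 + M) powr (- \<beta>)"
        using M(1) by (simp add: powr_add[symmetric])
      also have "\<dots> \<le> (1 + M) powr \<beta> * (1 + \<bar>v\<bar>) powr (- \<beta>)"
        by (rule mult_left_mono[OF m]) simp
      finally have one: "1 \<le> (1 + M) powr \<beta> * (1 + \<bar>v\<bar>) powr (- \<beta>)" .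
      have nn: "0 \<le> max B 0 * (1 + M) ^ r" using M(1) by simp
      have c2: "max B 0 * (1 + M) ^ r \<le> max B 0 * (1 + M) ^ r * ((1 + M) powr \<beta> * (1 + \<bar>v\<bar>) powr (- \<beta>))"
        using mult_left_mono[OF one nn] by simp
      have c3: "max B 0 * (1 + M) ^ r * ((1 + M) powr \<beta> * (1 + \<bar>v\<bar>) powr (- \<beta>)) = C2 * (1 + \<bar>v\<bar>) powr (- \<beta>)"
        by (simp add: C2_def mult_ac)
      have c4: "C2 * (1 + \<bar>v\<bar>) powr (- \<beta>) \<le> max C1 C2 * (1 + \<bar>v\<bar>) powr (- \<beta>)"
        by (rule mult_right_mono) auto
      have "\<bar>\<xi> v\<bar> * (1 + \<bar>v\<bar>) ^ r \<le> max C1 C2 * (1 + \<bar>v\<bar>) powr (- \<beta>)"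
        using c1 c2 c3 c4 by linarith
      then show ?thesis by (simp add: \<beta>_def)
    qed
  qed (use M in auto)
qed

lemma Z0_summable:
  fixes \<beta> :: real assumes b: "\<beta> > 1"
  shows "(\<lambda>k::int. (1 + \<bar>real_of_int k\<bar>) powr (-\<beta>)) summable_on UNIV"
proof -
  define e where "e k = (1 + \<bar>real_of_int k\<bar>) powr (-\<beta>)" for k :: int
  have "summable (\<lambda>n. real n powr (-\<beta>))" using b by (subst summable_real_powr_iff) auto
  then have "summable (\<lambda>n. real (Suc n) powr (-\<beta>))" by (subst summable_Suc_iff)
  then have s: "summable (\<lambda>n. e (int n))" by (simp add: e_def add.commute)
  have "(\<lambda>n. e (int n)) summable_on UNIV"
    using s by (subst summable_on_UNIV_nonneg_real_iff) (auto simp: e_def)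
  then have s1: "e summable_on (int ` UNIV)"
    by (subst summable_on_reindex) (auto simp: o_def)
  have "(\<lambda>n. e (- int n)) summable_on UNIV"
    using s by (subst summable_on_UNIV_nonneg_real_iff) (auto simp: e_def)
  then have s2: "e summable_on ((\<lambda>n. - int n) ` UNIV)"
    by (subst summable_on_reindex) (auto simp: o_def inj_def)
  have U: "(UNIV :: int set) = int ` UNIV \<union> (\<lambda>n. - int n) ` UNIV"
  proof -
    have "k \<in> int ` UNIV \<union> (\<lambda>n. - int n) ` UNIV" for k :: int
    proof (cases "k \<ge> 0")
      case True then show ?thesis by (metis UnI1 nonneg_int_cases rangeI)
    next
      case False then have "k = - int (nat (-k))" by simp
      then show ?thesis by blast
    qed
    then show ?thesis by blast
  qed
  have "e summable_on UNIV" using summable_on_union[OF s1 s2] U by simp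
  then show ?thesis unfolding e_def .
qed

lemma Zsum:
  fixes \<beta> :: real assumes b: "\<beta> > 1"
  obtains Z where "Z \<ge> 0" "\<And>u. (\<lambda>k::int. (1 + \<bar>u - real_of_int k\<bar>) powr (-\<beta>)) summable_on UNIV"
    "\<And>u. (\<Sum>\<^sub>\<infinity>k::int. (1 + \<bar>u - real_of_int k\<bar>) powr (-\<beta>)) \<le> Z"
proof -
  define e where "e k = (1 + \<bar>real_of_int k\<bar>) powr (-\<beta>)" for k :: int
  have se: "e summable_on UNIV" using Z0_summable[OF b] unfolding e_def .
  have sh: "(\<lambda>k. e (k - n0)) summable_on UNIV" for n0 :: int
    using se by (subst summable_on_reindex_bij_witness[where i="\<lambda>k. k + n0" and j="\<lambda>k. k - n0"]) auto
  have ih: "(\<Sum>\<^sub>\<infinity>k. e (k - n0)) = (\<Sum>\<^sub>\<infinity>k. e k)" for n0 :: int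
    by (rule infsum_reindex_bij_witness[where i="\<lambda>k. k + n0" and j="\<lambda>k. k - n0"]) auto
  have cmp: "(1 + \<bar>u - real_of_int k\<bar>) powr (-\<beta>) \<le> 2 powr \<beta> * e (k - \<lfloor>u\<rfloor>)" for u k
  proof -
    have "1 + \<bar>real_of_int (k - \<lfloor>u\<rfloor>)\<bar> \<le> 2 * (1 + \<bar>u - real_of_int k\<bar>)"
      using floor_le_iff[of u] le_floor_iff[of _ u] of_int_floor_le[of u] real_of_int_floor_add_one_gt[of u]
      by (simp add: abs_if) linarith
    then have "(2 * (1 + \<bar>u - real_of_int k\<bar>)) powr (-\<beta>) \<le> e (k - \<lfloor>u\<rfloor>)"
      unfolding e_def using b by (intro powr_mono2') auto
    then have "2 powr (-\<beta>) * (1 + \<bar>u - real_of_int k\<bar>) powr (-\<beta>) \<le> e (k - \<lfloor>u\<rfloor>)"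
      using powr_mult[of 2 "1 + \<bar>u - real_of_int k\<bar>" "-\<beta>"] by simp
    then have "2 powr \<beta> * (2 powr (-\<beta>) * (1 + \<bar>u - real_of_int k\<bar>) powr (-\<beta>)) \<le> 2 powr \<beta> * e (k - \<lfloor>u\<rfloor>)"
      by (rule mult_left_mono) auto
    moreover have "2 powr \<beta> * (2 powr (-\<beta>) * (1 + \<bar>u - real_of_int k\<bar>) powr (-\<beta>)) = (1 + \<bar>u - real_of_int k\<bar>) powr (-\<beta>)"
      by (simp add: powr_minus)
    ultimately show ?thesis by simp
  qed
  show ?thesis
  proof (rule that[of "2 powr \<beta> * (\<Sum>\<^sub>\<infinity>k. e k)"])
    show "0 \<le> 2 powr \<beta> * (\<Sum>\<^sub>\<infinity>k. e k)" unfolding e_def by (intro mult_nonneg_nonneg infsum_nonneg) auto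
  next
    fix u :: real
    have s2: "(\<lambda>k. 2 powr \<beta> * e (k - \<lfloor>u\<rfloor>)) summable_on UNIV"
      by (intro summable_on_cmult_right sh)
    show s: "(\<lambda>k::int. (1 + \<bar>u - real_of_int k\<bar>) powr (-\<beta>)) summable_on UNIV"
      by (rule summable_on_comparison_test[OF s2]) (auto intro: cmp)
    have "(\<Sum>\<^sub>\<infinity>k::int. (1 + \<bar>u - real_of_int k\<bar>) powr (-\<beta>)) \<le> (\<Sum>\<^sub>\<infinity>k. 2 powr \<beta> * e (k - \<lfloor>u\<rfloor>))"
      by (rule infsum_mono[OF s s2]) (rule cmp)
    also have "\<dots> = 2 powr \<beta> * (\<Sum>\<^sub>\<infinity>k. e k)"
      by (subst infsum_cmult_right) (auto intro: sh simp: ih)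
    finally show "(\<Sum>\<^sub>\<infinity>k::int. (1 + \<bar>u - real_of_int k\<bar>) powr (-\<beta>)) \<le> 2 powr \<beta> * (\<Sum>\<^sub>\<infinity>k. e k)" .
  qed
qed



lemma infsum_finite_sum:
  fixes f :: "'i \<Rightarrow> 'a \<Rightarrow> real"
  assumes "finite I" "\<And>i. i \<in> I \<Longrightarrow> f i summable_on A"
  shows "(\<lambda>x. \<Sum>i\<in>I. f i x) summable_on A \<and> infsum (\<lambda>x. \<Sum>i\<in>I. f i x) A = (\<Sum>i\<in>I. infsum (f i) A)"
proof -
  have "(\<lambda>x. \<Sum>i\<in>I. f i x) summable_on A \<and> infsum (\<lambda>x. \<Sum>i\<in>I. f i x) A = (\<Sum>i\<in>I. infsum (f i) A)"
    if "finite I" "\<forall>i\<in>I. f i summable_on A" for I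
    using that
  proof (induction I rule: finite_induct)
    case empty then show ?case by simp
  next
    case (insert i I)
    have s1: "f i summable_on A" using insert.prems by simp
    have IH: "(\<lambda>x. \<Sum>i\<in>I. f i x) summable_on A \<and> infsum (\<lambda>x. \<Sum>i\<in>I. f i x) A = (\<Sum>i\<in>I. infsum (f i) A)"
      using insert.IH insert.prems by simp
    have e1: "(\<lambda>x. \<Sum>i\<in>insert i I. f i x) = (\<lambda>x. f i x + (\<Sum>i\<in>I. f i x))"
      using insert.hyps by simp
    have e3: "(\<Sum>i\<in>insert i I. infsum (f i) A) = infsum (f i) A + (\<Sum>i\<in>I. infsum (f i) A)"
      using insert.hyps by simp
    show ?case
      unfolding e1 e3 using summable_on_add[OF s1 conjunct1[OF IH]] infsum_add[OF s1 conjunct1[OF IH]] IH by simp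
  qed
  then show ?thesis using assms by blast
qed

locale KS =
  fixes \<phi> \<psi> :: "real \<Rightarrow> real" and r :: nat and S\<phi> :: real
  assumes phi_summ: "\<And>u. (\<lambda>k::int. \<bar>\<phi> (u - of_int k)\<bar> * (1 + \<bar>u - of_int k\<bar>) ^ r) summable_on UNIV"
    and phi_bound: "\<And>u. (\<Sum>\<^sub>\<infinity>k::int. \<bar>\<phi> (u - of_int k)\<bar> * (1 + \<bar>u - of_int k\<bar>) ^ r) \<le> S\<phi>"
    and psi_int: "integrable lborel (\<lambda>v. \<bar>\<psi> v\<bar> * (1 + \<bar>v\<bar>) ^ r)"
    and psi_borel: "\<psi> \<in> borel_measurable borel"
begin

definition P\<psi> :: real where "P\<psi> = (LINT v|lborel. \<bar>\<psi> v\<bar> * (1 + \<bar>v\<bar>) ^ r)"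

definition J :: "real \<Rightarrow> (real \<Rightarrow> real) \<Rightarrow> int \<Rightarrow> real" where
  "J w h k = (LINT v|lborel. \<psi> v * h ((v + of_int k) / w))"

definition Lop :: "real \<Rightarrow> real \<Rightarrow> (real \<Rightarrow> real) \<Rightarrow> real" where
  "Lop w x h = (\<Sum>\<^sub>\<infinity>k::int. \<phi> (w * x - of_int k) * J w h k)"

definition pcl :: "real \<Rightarrow> (real \<Rightarrow> real) \<Rightarrow> bool" where
  "pcl x h \<longleftrightarrow> h \<in> borel_measurable borel \<and> (\<exists>A B. 0 \<le> A \<and> 0 \<le> B \<and> (\<forall>y. \<bar>h y\<bar> \<le> A + B * \<bar>y - x\<bar> ^ r))"

lemma shift_bound:
  fixes w x v A B :: real and k :: int
  assumes w: "w > 0" and A: "A \<ge> 0" and B: "B \<ge> 0"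
  shows "A + B * \<bar>(v + of_int k) / w - x\<bar> ^ r \<le> (A + B / w ^ r) * (1 + \<bar>w * x - of_int k\<bar>) ^ r * (1 + \<bar>v\<bar>) ^ r"
proof -
  define t where "t = of_int k - w * x"
  have vt: "v + t = (v + of_int k) - w * x" by (simp add: t_def)
  have "(v + t) / w = (v + of_int k) / w - w * x / w" unfolding vt by (rule diff_divide_distrib)
  also have "w * x / w = x" using w by simp
  finally have "(v + of_int k) / w - x = (v + t) / w" by simp
  then have e: "\<bar>(v + of_int k) / w - x\<bar> ^ r = \<bar>v + t\<bar> ^ r / w ^ r"
    using w by (simp add: power_divide)
  have "\<bar>v + t\<bar> \<le> \<bar>v\<bar> + \<bar>t\<bar>" by (rule abs_triangle_ineq)
  also have "\<dots> \<le> (1 + \<bar>v\<bar>) * (1 + \<bar>t\<bar>)" by (simp add: algebra_simps)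
  finally have "\<bar>v + t\<bar> ^ r \<le> ((1 + \<bar>v\<bar>) * (1 + \<bar>t\<bar>)) ^ r" by (intro power_mono) auto
  then have "\<bar>v + t\<bar> ^ r / w ^ r \<le> ((1 + \<bar>v\<bar>) * (1 + \<bar>t\<bar>)) ^ r / w ^ r"
    using w by (intro divide_right_mono) auto
  define P where "P = (1 + \<bar>t\<bar>) ^ r * (1 + \<bar>v\<bar>) ^ r"
  have Pe: "((1 + \<bar>v\<bar>) * (1 + \<bar>t\<bar>)) ^ r = P" unfolding P_def by (simp add: power_mult_distrib)
  have b1: "B * (\<bar>v + t\<bar> ^ r / w ^ r) \<le> B * (P / w ^ r)"
    using \<open>\<bar>v + t\<bar> ^ r / w ^ r \<le> _\<close> B unfolding Pe by (intro mult_left_mono) auto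
  have P1: "1 \<le> P" unfolding P_def
  proof -
    have "1 \<le> (1 + \<bar>t\<bar>) ^ r" "1 \<le> (1 + \<bar>v\<bar>) ^ r" by (auto intro!: one_le_power)
    then show "1 \<le> (1 + \<bar>t\<bar>) ^ r * (1 + \<bar>v\<bar>) ^ r" by (metis mult_mono' mult_1 zero_le_one)
  qed
  have a1: "A \<le> A * P" using A P1 by (simp add: mult_le_cancel_left1)
  have "A + B * \<bar>(v + of_int k) / w - x\<bar> ^ r \<le> A * P + B * (P / w ^ r)"
    unfolding e using a1 b1 by linarith
  also have "\<dots> = (A + B / w ^ r) * P" by (simp add: algebra_simps)
  finally have fin: "A + B * \<bar>(v + of_int k) / w - x\<bar> ^ r \<le> (A + B / w ^ r) * P" .
  have "\<bar>t\<bar> = \<bar>w * x - of_int k\<bar>" by (simp add: t_def abs_minus_commute)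
  then show ?thesis using fin by (simp add: P_def mult.assoc)
qed

lemma Ppsi_nonneg: "P\<psi> \<ge> 0"
  unfolding P\<psi>_def by (rule integral_nonneg_AE) auto


lemma J_int:
  fixes w x A B :: real and h :: "real \<Rightarrow> real" and k :: int
  assumes w: "w > 0" and hb: "h \<in> borel_measurable borel" and A: "A \<ge> 0" and B: "B \<ge> 0"
    and hB: "\<And>y. \<bar>h y\<bar> \<le> A + B * \<bar>y - x\<bar> ^ r"
  shows "integrable lborel (\<lambda>v. \<psi> v * h ((v + of_int k) / w))"
    and "\<bar>J w h k\<bar> \<le> (A + B / w ^ r) * (1 + \<bar>w * x - of_int k\<bar>) ^ r * P\<psi>"
proof -
  define c where "c = (A + B / w ^ r) * (1 + \<bar>w * x - of_int k\<bar>) ^ r"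
  have c0: "c \<ge> 0" unfolding c_def using A B w by auto
  have gi: "integrable lborel (\<lambda>v. c * (\<bar>\<psi> v\<bar> * (1 + \<bar>v\<bar>) ^ r))"
    using psi_int by simp
  have le: "\<bar>\<psi> v * h ((v + of_int k) / w)\<bar> \<le> c * (\<bar>\<psi> v\<bar> * (1 + \<bar>v\<bar>) ^ r)" for v
  proof -
    have "\<bar>h ((v + of_int k) / w)\<bar> \<le> c * (1 + \<bar>v\<bar>) ^ r"
      using hB[of "(v + of_int k) / w"] shift_bound[OF w A B, of v k x] unfolding c_def by linarith
    then have "\<bar>\<psi> v\<bar> * \<bar>h ((v + of_int k) / w)\<bar> \<le> \<bar>\<psi> v\<bar> * (c * (1 + \<bar>v\<bar>) ^ r)"
      by (rule mult_left_mono) simp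
    then show ?thesis by (simp add: abs_mult mult_ac)
  qed
  have meas: "(\<lambda>v. \<psi> v * h ((v + of_int k) / w)) \<in> borel_measurable lborel"
    using psi_borel hb by measurable
  show int: "integrable lborel (\<lambda>v. \<psi> v * h ((v + of_int k) / w))"
  proof (rule Bochner_Integration.integrable_bound[OF gi meas])
    show "AE v in lborel. norm (\<psi> v * h ((v + of_int k) / w)) \<le> norm (c * (\<bar>\<psi> v\<bar> * (1 + \<bar>v\<bar>) ^ r))"
      using le c0 by (intro AE_I2) (simp add: abs_mult)
  qed
  have "norm (J w h k) \<le> (LINT v|lborel. c * (\<bar>\<psi> v\<bar> * (1 + \<bar>v\<bar>) ^ r))"
    unfolding J_def by (rule Bochner_Integration.integral_norm_bound_integral[OF int gi]) (use le in simp)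
  also have "\<dots> = c * P\<psi>" by (simp add: P\<psi>_def)
  finally show "\<bar>J w h k\<bar> \<le> (A + B / w ^ r) * (1 + \<bar>w * x - of_int k\<bar>) ^ r * P\<psi>"
    by (simp add: c_def)
qed

lemma Lop_summable:
  fixes w x A B :: real and h :: "real \<Rightarrow> real"
  assumes w: "w > 0" and hb: "h \<in> borel_measurable borel" and A: "A \<ge> 0" and B: "B \<ge> 0"
    and hB: "\<And>y. \<bar>h y\<bar> \<le> A + B * \<bar>y - x\<bar> ^ r"
  shows "(\<lambda>k::int. \<phi> (w * x - of_int k) * J w h k) summable_on UNIV"
    and "\<bar>Lop w x h\<bar> \<le> (A + B / w ^ r) * P\<psi> * S\<phi>"
proof -
  define c where "c = (A + B / w ^ r) * P\<psi>"
  have c0: "c \<ge> 0" unfolding c_def using A B w Ppsi_nonneg by auto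
  define g where "g k = c * (\<bar>\<phi> (w * x - of_int k)\<bar> * (1 + \<bar>w * x - of_int k\<bar>) ^ r)" for k :: int
  have gs: "g summable_on UNIV" unfolding g_def by (intro summable_on_cmult_right phi_summ)
  have le: "\<bar>\<phi> (w * x - of_int k) * J w h k\<bar> \<le> g k" for k
  proof -
    have "\<bar>\<phi> (w * x - of_int k)\<bar> * \<bar>J w h k\<bar> \<le> \<bar>\<phi> (w * x - of_int k)\<bar> * ((A + B / w ^ r) * (1 + \<bar>w * x - of_int k\<bar>) ^ r * P\<psi>)"
      by (rule mult_left_mono[OF J_int(2)[OF w hb A B hB]]) simp
    then show ?thesis by (simp add: g_def c_def abs_mult mult_ac)
  qed
  have ns: "(\<lambda>k::int. norm (\<phi> (w * x - of_int k) * J w h k)) summable_on UNIV"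
    by (rule summable_on_comparison_test[OF gs]) (use le in auto)
  then show s: "(\<lambda>k::int. \<phi> (w * x - of_int k) * J w h k) summable_on UNIV"
    using summable_on_iff_abs_summable_on_real[of "\<lambda>k::int. \<phi> (w * x - of_int k) * J w h k" UNIV] by simp
  have "\<bar>Lop w x h\<bar> \<le> (\<Sum>\<^sub>\<infinity>k. norm (\<phi> (w * x - of_int k) * J w h k))"
    unfolding Lop_def using norm_infsum_bound[OF ns] by simp
  also have "\<dots> \<le> (\<Sum>\<^sub>\<infinity>k. g k)"
    by (rule infsum_mono[OF ns gs]) (use le in simp)
  also have "\<dots> = c * (\<Sum>\<^sub>\<infinity>k::int. \<bar>\<phi> (w * x - of_int k)\<bar> * (1 + \<bar>w * x - of_int k\<bar>) ^ r)"
    unfolding g_def by (rule infsum_cmult_right') 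
  also have "\<dots> \<le> c * S\<phi>" by (intro mult_left_mono phi_bound c0)
  finally show "\<bar>Lop w x h\<bar> \<le> (A + B / w ^ r) * P\<psi> * S\<phi>" by (simp add: c_def)
qed

lemma pcl_add:
  assumes "pcl x h1" "pcl x h2" shows "pcl x (\<lambda>y. h1 y + h2 y)"
proof -
  obtain A1 B1 where 1: "0 \<le> A1" "0 \<le> B1" "\<And>y. \<bar>h1 y\<bar> \<le> A1 + B1 * \<bar>y - x\<bar> ^ r" "h1 \<in> borel_measurable borel"
    using assms(1) unfolding pcl_def by auto
  obtain A2 B2 where 2: "0 \<le> A2" "0 \<le> B2" "\<And>y. \<bar>h2 y\<bar> \<le> A2 + B2 * \<bar>y - x\<bar> ^ r" "h2 \<in> borel_measurable borel"
    using assms(2) unfolding pcl_def by auto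
  have "\<bar>h1 y + h2 y\<bar> \<le> (A1 + A2) + (B1 + B2) * \<bar>y - x\<bar> ^ r" for y
    using 1(3)[of y] 2(3)[of y] by (simp add: algebra_simps abs_triangle_ineq order_trans[OF abs_triangle_ineq])
  moreover have "(\<lambda>y. h1 y + h2 y) \<in> borel_measurable borel" using 1(4) 2(4) by measurable
  ultimately show ?thesis unfolding pcl_def using 1 2
    by (intro conjI exI[of _ "A1 + A2"] exI[of _ "B1 + B2"]) auto
qed

lemma pcl_cmult:
  assumes "pcl x h" shows "pcl x (\<lambda>y. c * h y)"
proof -
  obtain A B where 1: "0 \<le> A" "0 \<le> B" "\<And>y. \<bar>h y\<bar> \<le> A + B * \<bar>y - x\<bar> ^ r" "h \<in> borel_measurable borel"
    using assms(1) unfolding pcl_def by auto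
  have "\<bar>c * h y\<bar> \<le> \<bar>c\<bar> * A + (\<bar>c\<bar> * B) * \<bar>y - x\<bar> ^ r" for y
  proof -
    have "\<bar>c\<bar> * \<bar>h y\<bar> \<le> \<bar>c\<bar> * (A + B * \<bar>y - x\<bar> ^ r)" by (rule mult_left_mono[OF 1(3)]) simp
    then show ?thesis by (simp add: abs_mult algebra_simps)
  qed
  moreover have "(\<lambda>y. c * h y) \<in> borel_measurable borel" using 1(4) by measurable
  ultimately show ?thesis unfolding pcl_def using 1
    by (intro conjI exI[of _ "\<bar>c\<bar> * A"] exI[of _ "\<bar>c\<bar> * B"]) auto
qed

lemma pcl_sum:
  assumes "finite I" "\<And>i. i \<in> I \<Longrightarrow> pcl x (h i)" shows "pcl x (\<lambda>y. \<Sum>i\<in>I. h i y)"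
proof -
  have "pcl x (\<lambda>y. \<Sum>i\<in>I. h i y)" if "finite I" "\<forall>i\<in>I. pcl x (h i)" for I
    using that
  proof (induction I rule: finite_induct)
    case empty then show ?case unfolding pcl_def by (intro conjI exI[of _ 0]) auto
  next
    case (insert i I)
    have e: "(\<lambda>y. \<Sum>i\<in>insert i I. h i y) = (\<lambda>y. h i y + (\<Sum>i\<in>I. h i y))"
      using insert.hyps by simp
    show ?case unfolding e using insert by (intro pcl_add) auto
  qed
  then show ?thesis using assms by blast
qed

lemma pcl_cont:
  assumes "continuous_on UNIV h" "A \<ge> 0" "B \<ge> 0" "\<And>y. \<bar>h y\<bar> \<le> A + B * \<bar>y - x\<bar> ^ r"
  shows "pcl x h"
  unfolding pcl_def using assms by (auto intro: borel_measurable_continuous_onI)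

lemma pclE:
  assumes "pcl x h"
  obtains A B where "h \<in> borel_measurable borel" "0 \<le> A" "0 \<le> B" "\<And>y. \<bar>h y\<bar> \<le> A + B * \<bar>y - x\<bar> ^ r"
  using assms unfolding pcl_def by auto

lemma Lop_add:
  assumes w: "w > 0" and h1: "pcl x h1" and h2: "pcl x h2"
  shows "Lop w x (\<lambda>y. h1 y + h2 y) = Lop w x h1 + Lop w x h2"
proof -
  obtain A1 B1 where 1: "h1 \<in> borel_measurable borel" "0 \<le> A1" "0 \<le> B1" "\<And>y. \<bar>h1 y\<bar> \<le> A1 + B1 * \<bar>y - x\<bar> ^ r"
    by (rule pclE[OF h1]) auto
  obtain A2 B2 where 2: "h2 \<in> borel_measurable borel" "0 \<le> A2" "0 \<le> B2" "\<And>y. \<bar>h2 y\<bar> \<le> A2 + B2 * \<bar>y - x\<bar> ^ r"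
    by (rule pclE[OF h2]) auto
  have J: "J w (\<lambda>y. h1 y + h2 y) k = J w h1 k + J w h2 k" for k
  proof -
    have "J w (\<lambda>y. h1 y + h2 y) k = (LINT v|lborel. \<psi> v * h1 ((v + of_int k) / w) + \<psi> v * h2 ((v + of_int k) / w))"
      unfolding J_def by (simp add: distrib_left)
    also have "\<dots> = J w h1 k + J w h2 k"
      unfolding J_def by (rule Bochner_Integration.integral_add[OF J_int(1)[OF w 1] J_int(1)[OF w 2]])
    finally show ?thesis .
  qed
  have "Lop w x (\<lambda>y. h1 y + h2 y) = (\<Sum>\<^sub>\<infinity>k. \<phi> (w * x - of_int k) * J w h1 k + \<phi> (w * x - of_int k) * J w h2 k)"
    unfolding Lop_def J by (simp add: distrib_left)
  also have "\<dots> = Lop w x h1 + Lop w x h2"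
    unfolding Lop_def by (rule infsum_add[OF Lop_summable(1)[OF w 1] Lop_summable(1)[OF w 2]])
  finally show ?thesis .
qed

lemma Lop_cmult:
  "Lop w x (\<lambda>y. c * h y) = c * Lop w x h"
proof -
  have J: "J w (\<lambda>y. c * h y) k = c * J w h k" for k
    unfolding J_def by (simp add: mult.left_commute)
  show ?thesis unfolding Lop_def J
    by (simp add: mult.left_commute infsum_cmult_right')
qed

lemma Lop_sum:
  assumes w: "w > 0" and "finite I" "\<And>i. i \<in> I \<Longrightarrow> pcl x (h i)"
  shows "Lop w x (\<lambda>y. \<Sum>i\<in>I. h i y) = (\<Sum>i\<in>I. Lop w x (h i))"
proof -
  have "Lop w x (\<lambda>y. \<Sum>i\<in>I. h i y) = (\<Sum>i\<in>I. Lop w x (h i))" if "finite I" "\<forall>i\<in>I. pcl x (h i)" for I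
    using that
  proof (induction I rule: finite_induct)
    case empty
    have "J w (\<lambda>y. 0) k = 0" for k unfolding J_def by simp
    then show ?case unfolding Lop_def by simp
  next
    case (insert i I)
    have e: "(\<lambda>y. \<Sum>i\<in>insert i I. h i y) = (\<lambda>y. h i y + (\<Sum>i\<in>I. h i y))"
      using insert.hyps by simp
    have "Lop w x (\<lambda>y. h i y + (\<Sum>i\<in>I. h i y)) = Lop w x (h i) + Lop w x (\<lambda>y. \<Sum>i\<in>I. h i y)"
      using insert.prems insert.hyps by (intro Lop_add[OF w] pcl_sum) auto
    then show ?case unfolding e using insert by simp
  qed
  then show ?thesis using assms by blast
qed

lemma pow_le_onepr:
  fixes a :: real assumes "j \<le> r" shows "\<bar>a\<bar> ^ j \<le> (1 + \<bar>a\<bar>) ^ r"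
proof -
  have "\<bar>a\<bar> ^ j \<le> (1 + \<bar>a\<bar>) ^ j" by (rule power_mono) auto
  also have "\<dots> \<le> (1 + \<bar>a\<bar>) ^ r" by (rule power_increasing[OF assms]) auto
  finally show ?thesis .
qed

lemma disc_summable:
  assumes "j \<le> r"
  shows "(\<lambda>k::int. \<phi> (u - of_int k) * (of_int k - u) ^ j) summable_on UNIV"
proof -
  have ns: "(\<lambda>k::int. norm (\<phi> (u - of_int k) * (of_int k - u) ^ j)) summable_on UNIV"
  proof (rule summable_on_comparison_test[OF phi_summ[of u]])
    fix k :: int
    have "\<bar>of_int k - u\<bar> ^ j \<le> (1 + \<bar>u - of_int k\<bar>) ^ r"
      using pow_le_onepr[OF assms, of "of_int k - u"] by (simp add: abs_minus_commute)
    then have "\<bar>\<phi> (u - of_int k)\<bar> * \<bar>of_int k - u\<bar> ^ j \<le> \<bar>\<phi> (u - of_int k)\<bar> * (1 + \<bar>u - of_int k\<bar>) ^ r"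
      by (rule mult_left_mono) simp
    then show "norm (\<phi> (u - of_int k) * (of_int k - u) ^ j) \<le> \<bar>\<phi> (u - of_int k)\<bar> * (1 + \<bar>u - of_int k\<bar>) ^ r"
      by (simp add: abs_mult power_abs)
  qed simp
  then show ?thesis
    using summable_on_iff_abs_summable_on_real[of "\<lambda>k::int. \<phi> (u - of_int k) * (of_int k - u) ^ j" UNIV] by simp
qed

lemma psi_mom_int:
  assumes "j \<le> r"
  shows "integrable lborel (\<lambda>v. v ^ j * \<psi> v)"
proof (rule Bochner_Integration.integrable_bound[OF psi_int])
  show "(\<lambda>v. v ^ j * \<psi> v) \<in> borel_measurable lborel" using psi_borel by measurable
  show "AE v in lborel. norm (v ^ j * \<psi> v) \<le> norm (\<bar>\<psi> v\<bar> * (1 + \<bar>v\<bar>) ^ r)"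
  proof (rule AE_I2)
    fix v :: real
    have "\<bar>v\<bar> ^ j * \<bar>\<psi> v\<bar> \<le> (1 + \<bar>v\<bar>) ^ r * \<bar>\<psi> v\<bar>"
      by (rule mult_right_mono[OF pow_le_onepr[OF assms]]) simp
    then show "norm (v ^ j * \<psi> v) \<le> norm (\<bar>\<psi> v\<bar> * (1 + \<bar>v\<bar>) ^ r)"
      by (simp add: abs_mult power_abs mult_ac)
  qed
qed

lemma J_monomial:
  fixes w x :: real and k :: int
  assumes w: "w > 0" and m: "m \<le> r"
  shows "J w (\<lambda>y. (y - x) ^ m) k =
     (\<Sum>\<nu>\<le>m. of_nat (m choose \<nu>) * (of_int k - w * x) ^ (m - \<nu>) / w ^ m * cont_moment \<psi> \<nu>)"
proof -
  define t where "t = of_int k - w * x"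
  have vt: "(v + of_int k) / w - x = (v + t) / w" for v
  proof -
    have vt: "v + t = (v + of_int k) - w * x" by (simp add: t_def)
    have "(v + t) / w = (v + of_int k) / w - w * x / w" unfolding vt by (rule diff_divide_distrib)
    also have "w * x / w = x" using w by simp
    finally show ?thesis by simp
  qed
  have pt: "\<psi> v * ((v + of_int k) / w - x) ^ m =
      (\<Sum>\<nu>\<le>m. (of_nat (m choose \<nu>) * t ^ (m - \<nu>) / w ^ m) * (v ^ \<nu> * \<psi> v))" for v
  proof -
    have "\<psi> v * ((v + of_int k) / w - x) ^ m = \<psi> v * ((v + t) ^ m / w ^ m)"
      unfolding vt by (simp add: power_divide)
    also have "\<dots> = \<psi> v * ((\<Sum>\<nu>\<le>m. of_nat (m choose \<nu>) * v ^ \<nu> * t ^ (m - \<nu>)) / w ^ m)"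
      by (simp only: binomial_ring)
    also have "\<dots> = (\<Sum>\<nu>\<le>m. (of_nat (m choose \<nu>) * t ^ (m - \<nu>) / w ^ m) * (v ^ \<nu> * \<psi> v))"
      by (simp add: sum_distrib_left sum_divide_distrib mult_ac)
    finally show ?thesis .
  qed
  have "J w (\<lambda>y. (y - x) ^ m) k = (LINT v|lborel. (\<Sum>\<nu>\<le>m. (of_nat (m choose \<nu>) * t ^ (m - \<nu>) / w ^ m) * (v ^ \<nu> * \<psi> v)))"
    unfolding J_def pt ..
  also have "\<dots> = (\<Sum>\<nu>\<le>m. (LINT v|lborel. (of_nat (m choose \<nu>) * t ^ (m - \<nu>) / w ^ m) * (v ^ \<nu> * \<psi> v)))"
    by (rule Bochner_Integration.integral_sum) (use psi_mom_int m in auto)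
  also have "\<dots> = (\<Sum>\<nu>\<le>m. of_nat (m choose \<nu>) * t ^ (m - \<nu>) / w ^ m * cont_moment \<psi> \<nu>)"
    unfolding cont_moment_def by simp
  finally show ?thesis by (simp add: t_def)
qed

lemma Lop_monomial:
  fixes w x :: real
  assumes w: "w > 0" and m: "m < r"
    and dm: "\<And>j u. j \<le> r \<Longrightarrow> disc_moment \<phi> j u = disc_moment_const \<phi> j"
    and cii: "cond_ii r \<phi> \<psi>" and c0: "cont_moment \<psi> 0 = 1"
  shows "Lop w x (\<lambda>y. (y - x) ^ m) = (if m = 0 then 1 else 0)"
proof -
  define u where "u = w * x"
  define a where "a \<nu> = of_nat (m choose \<nu>) / w ^ m * cont_moment \<psi> \<nu>" for \<nu>
  have "Lop w x (\<lambda>y. (y - x) ^ m) = (\<Sum>\<^sub>\<infinity>k::int. (\<Sum>\<nu>\<le>m. a \<nu> * (\<phi> (u - of_int k) * (of_int k - u) ^ (m - \<nu>))))"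
    unfolding Lop_def J_monomial[OF w less_imp_le[OF m]] u_def a_def
    by (intro infsum_cong) (simp add: sum_distrib_left mult_ac)
  also have "\<dots> = (\<Sum>\<nu>\<le>m. (\<Sum>\<^sub>\<infinity>k::int. a \<nu> * (\<phi> (u - of_int k) * (of_int k - u) ^ (m - \<nu>))))"
    by (rule conjunct2[OF infsum_finite_sum]) (use m in \<open>auto intro!: summable_on_cmult_right disc_summable\<close>)
  also have "\<dots> = (\<Sum>\<nu>\<le>m. a \<nu> * disc_moment \<phi> (m - \<nu>) u)"
    unfolding disc_moment_def by (simp add: infsum_cmult_right')
  also have "\<dots> = (\<Sum>\<nu>\<le>m. a \<nu> * disc_moment_const \<phi> (m - \<nu>))"
    using m by (intro sum.cong refl) (simp add: dm)
  also have "\<dots> = (\<Sum>\<nu>=0..m. real (m choose \<nu>) * disc_moment_const \<phi> (m - \<nu>) * cont_moment \<psi> \<nu>) / w ^ m"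
    unfolding a_def atMost_atLeast0 by (simp add: sum_divide_distrib mult_ac)
  also have "\<dots> = (if m = 0 then 1 else 0)"
  proof (cases "m = 0")
    case True then show ?thesis using c0 by (simp add: disc_moment_const_def)
  next
    case False
    then have "m \<in> {1..r-1}" using m by auto
    then have "(\<Sum>\<nu>=0..m. real (m choose \<nu>) * disc_moment_const \<phi> (m - \<nu>) * cont_moment \<psi> \<nu>) = 0"
      using cii unfolding cond_ii_def by blast
    then show ?thesis using False by simp
  qed
  finally show ?thesis .
qed

lemma durrmeyer_Lop:
  assumes w: "w > 0"
  shows "durrmeyer \<phi> \<psi> w h x = Lop w x h"
proof -
  have "w * (LINT u|lborel. \<psi> (w * u - of_int k) * h u) = J w h k" for k :: int
  proof -
    have "(LINT u|lborel. \<psi> (w * u - of_int k) * h u) =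
        \<bar>1 / w\<bar> *\<^sub>R (LINT v|lborel. \<psi> (w * (of_int k / w + (1 / w) * v) - of_int k) * h (of_int k / w + (1 / w) * v))"
      by (rule lborel_integral_real_affine) (use w in simp)
    also have "(\<lambda>v. \<psi> (w * (of_int k / w + (1 / w) * v) - of_int k) * h (of_int k / w + (1 / w) * v))
        = (\<lambda>v. \<psi> v * h ((v + of_int k) / w))"
      using w by (intro ext) (simp add: field_simps)
    finally show ?thesis using w by (simp add: J_def)
  qed
  then show ?thesis unfolding durrmeyer_def Lop_def by simp
qed

end


lemma pow_le_one_plus:
  fixes a :: real assumes "m \<le> r" shows "\<bar>a\<bar> ^ m \<le> 1 + \<bar>a\<bar> ^ r"
proof (cases "\<bar>a\<bar> \<le> 1")
  case True
  then have "\<bar>a\<bar> ^ m \<le> 1" by (simp add: power_le_one)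
  then show ?thesis by (smt (verit) zero_le_power abs_ge_zero)
next
  case False
  then have "\<bar>a\<bar> ^ m \<le> \<bar>a\<bar> ^ r" by (intro power_increasing assms) auto
  then show ?thesis by simp
qed

context KS
begin

lemma pcl_monomial:
  assumes "m < r" shows "pcl x (\<lambda>y. (y - x) ^ m)"
  by (rule pcl_cont[where A=1 and B=1]) (use assms pow_le_one_plus in \<open>auto intro!: continuous_intros simp: power_abs\<close>)

lemma pcl_poly:
  assumes "r > 0" shows "pcl x (\<lambda>y. \<Sum>m<r. a m * (y - x) ^ m)"
  by (intro pcl_sum pcl_cmult pcl_monomial) auto

lemma Lop_poly:
  assumes w: "w > 0" and r0: "r > 0"
    and dm: "\<And>j u. j \<le> r \<Longrightarrow> disc_moment \<phi> j u = disc_moment_const \<phi> j"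
    and cii: "cond_ii r \<phi> \<psi>" and c0: "cont_moment \<psi> 0 = 1"
  shows "Lop w x (\<lambda>y. \<Sum>m<r. a m * (y - x) ^ m) = a 0"
proof -
  have "Lop w x (\<lambda>y. \<Sum>m<r. a m * (y - x) ^ m) = (\<Sum>m<r. Lop w x (\<lambda>y. a m * (y - x) ^ m))"
    by (rule Lop_sum[OF w]) (auto intro: pcl_cmult pcl_monomial)
  also have "\<dots> = (\<Sum>m<r. a m * (if m = 0 then 1 else 0))"
    by (intro sum.cong refl) (simp add: Lop_cmult Lop_monomial[OF w _ dm cii c0])
  also have "\<dots> = (\<Sum>m<r. if m = 0 then a m else 0)"
    by (intro sum.cong refl) simp
  also have "\<dots> = a 0" using r0 by (subst sum.delta) auto
  finally show ?thesis .
qed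

lemma main_est:
  fixes f :: "real \<Rightarrow> real" and w x \<omega> :: real
  assumes w: "w > 0" and r0: "r > 0" and f: "continuous_on UNIV f"
    and om: "\<omega> \<ge> 0" and h\<omega>: "\<And>t y. 0 \<le> t \<Longrightarrow> t \<le> 1 / w \<Longrightarrow> \<bar>fdiff r t f y\<bar> \<le> \<omega>"
    and dm: "\<And>j u. j \<le> r \<Longrightarrow> disc_moment \<phi> j u = disc_moment_const \<phi> j"
    and cii: "cond_ii r \<phi> \<psi>" and c0: "cont_moment \<psi> 0 = 1"
  shows "\<bar>Lop w x f - f x\<bar> \<le> (1 + P\<psi> * S\<phi> + 2 ^ r * real r ^ r * P\<psi> * S\<phi>) * \<omega>"
proof -
  define s where "s = 1 / (real r * w)"
  have s0: "s > 0" using r0 w by (simp add: s_def)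
  have rs: "real r * s = 1 / w" using r0 w by (simp add: s_def)
  define sj where "sj j = real j * s" for j :: nat
  define g where "g j = (Av (sj j) ^^ r) f" for j
  define c where "c j = real (r choose j) * (-1) ^ (r - j)" for j
  define e where "e y = (\<Sum>j=0..r. c j * g j y)" for y
  define coef where "coef j m = (Dv (sj j) ^^ m) ((Av (sj j) ^^ (r - m)) f) x / fact m" for j m
  define T where "T j y = (\<Sum>m<r. coef j m * (y - x) ^ m)" for j y
  define R where "R j y = g j y - T j y" for j y
  define d where "d j = - ((-1) ^ r * c j)" for j
  have sjpos: "sj j > 0" if "j \<in> {1..r}" for j using that s0 by (simp add: sj_def)
  have sjle: "sj j \<le> 1 / w" if "j \<in> {1..r}" for j
  proof -
    have "real j * s \<le> real r * s" using that s0 by (intro mult_right_mono) auto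
    then show ?thesis using rs by (simp add: sj_def)
  qed
  have g0: "g 0 = f" by (simp add: g_def sj_def Av_zero_pow)
  have gcont: "continuous_on UNIV (g j)" if "j \<in> {0..r}" for j
  proof (cases "j = 0")
    case True then show ?thesis using g0 f by simp
  next
    case False
    then have "sj j > 0" using s0 by (simp add: sj_def)
    then show ?thesis unfolding g_def by (rule Av_pow_cont[OF _ f])
  qed
  have m1: "(-1::real) ^ r * (-1) ^ r = 1" by (simp add: power_mult_distrib[symmetric])
  have fdec: "f y = (-1) ^ r * e y + (\<Sum>j\<in>{1..r}. d j * (T j y + R j y))" for y
  proof -
    have "e y = c 0 * g 0 y + (\<Sum>j\<in>{1..r}. c j * g j y)"
      unfolding e_def by (simp add: sum.atLeast_Suc_atMost)
    then have "(-1) ^ r * e y = f y - (\<Sum>j\<in>{1..r}. d j * g j y)"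
      using m1 by (simp add: c_def d_def g0 sum_distrib_left algebra_simps sum_negf)
    then show ?thesis by (simp add: R_def)
  qed
  have eb: "\<bar>e y\<bar> \<le> \<omega>" for y
  proof -
    have "\<bar>\<Sum>j=0..r. real (r choose j) * (-1) ^ (r - j) * (Av (real j * s) ^^ r) f y\<bar> \<le> \<omega>"
      by (rule smoothing_error[OF s0 f]) (use h\<omega> rs in auto)
    then show ?thesis by (simp add: e_def c_def g_def sj_def mult.assoc)
  qed
  have econt: "continuous_on UNIV e"
    unfolding e_def by (intro continuous_intros gcont) auto
  have pcl_e: "pcl x e"
    by (rule pcl_cont[OF econt om, of 0]) (use eb in auto)
  have Tpoly: "T j = (\<lambda>y. \<Sum>m<r. coef j m * (y - x) ^ m)" for j by (simp add: T_def fun_eq_iff)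
  have pcl_T: "pcl x (T j)" for j unfolding Tpoly by (rule pcl_poly[OF r0])
  have LopT: "Lop w x (T j) = coef j 0" for j unfolding Tpoly by (rule Lop_poly[OF w r0 dm cii c0])
  have Tx: "T j x = g j x" for j
  proof -
    have "T j x = (\<Sum>m<r. if m = 0 then coef j m else 0)"
      unfolding T_def by (intro sum.cong refl) simp
    also have "\<dots> = coef j 0" using r0 by (subst sum.delta) auto
    finally show ?thesis by (simp add: coef_def g_def)
  qed
  have Rx: "R j x = 0" for j by (simp add: R_def Tx)
  define Bj where "Bj j = \<omega> / sj j ^ r / fact r" for j
  have Rb: "\<bar>R j y\<bar> \<le> Bj j * \<bar>y - x\<bar> ^ r" if j: "j \<in> {1..r}" for j y
  proof -
    have "\<bar>(Av (sj j) ^^ r) f y - (\<Sum>m<r. (Dv (sj j) ^^ m) ((Av (sj j) ^^ (r - m)) f) x / fact m * (y - x) ^ m)\<bar>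
           \<le> \<omega> / sj j ^ r / fact r * \<bar>y - x\<bar> ^ r"
      by (rule taylor_decomp[OF sjpos[OF j] f r0]) (use h\<omega> sjle[OF j] sjpos[OF j] in auto)
    then show ?thesis by (simp add: R_def T_def g_def coef_def Bj_def)
  qed
  have Bj0: "Bj j \<ge> 0" if "j \<in> {1..r}" for j using sjpos[OF that] om by (simp add: Bj_def)
  have Rcont: "continuous_on UNIV (R j)" if "j \<in> {1..r}" for j
    unfolding R_def[abs_def] Tpoly using gcont[of j] that by (intro continuous_intros) auto
  have pcl_R: "pcl x (R j)" if "j \<in> {1..r}" for j
    by (rule pcl_cont[OF Rcont[OF that] order_refl Bj0[OF that]]) (use Rb[OF that] in simp)
  have Lf: "Lop w x f = (-1) ^ r * Lop w x e + (\<Sum>j\<in>{1..r}. d j * (Lop w x (T j) + Lop w x (R j)))"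
  proof -
    have "Lop w x f = Lop w x (\<lambda>y. (-1) ^ r * e y + (\<Sum>j\<in>{1..r}. d j * (T j y + R j y)))"
      using fdec by (metis)
    also have "\<dots> = Lop w x (\<lambda>y. (-1) ^ r * e y) + Lop w x (\<lambda>y. \<Sum>j\<in>{1..r}. d j * (T j y + R j y))"
      by (intro Lop_add[OF w] pcl_cmult pcl_e pcl_sum pcl_add pcl_T pcl_R) auto
    also have "Lop w x (\<lambda>y. \<Sum>j\<in>{1..r}. d j * (T j y + R j y)) = (\<Sum>j\<in>{1..r}. Lop w x (\<lambda>y. d j * (T j y + R j y)))"
      by (intro Lop_sum[OF w] pcl_cmult pcl_add pcl_T pcl_R) auto
    also have "\<dots> = (\<Sum>j\<in>{1..r}. d j * (Lop w x (T j) + Lop w x (R j)))"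
      by (intro sum.cong refl) (simp add: Lop_cmult Lop_add[OF w pcl_T pcl_R])
    finally show ?thesis by (simp add: Lop_cmult)
  qed
  have fx: "f x = (-1) ^ r * e x + (\<Sum>j\<in>{1..r}. d j * Lop w x (T j))"
    using fdec[of x] by (simp add: Rx LopT Tx coef_def g_def)
  have diff: "Lop w x f - f x = (-1) ^ r * (Lop w x e - e x) + (\<Sum>j\<in>{1..r}. d j * Lop w x (R j))"
    unfolding Lf fx by (simp add: algebra_simps sum.distrib)
  have Le: "\<bar>Lop w x e\<bar> \<le> \<omega> * P\<psi> * S\<phi>"
    using Lop_summable(2)[OF w _ om order_refl, of e x] pcl_e eb unfolding pcl_def by simp
  have LR: "\<bar>Lop w x (R j)\<bar> \<le> real r ^ r * \<omega> * P\<psi> * S\<phi>" if j: "j \<in> {1..r}" for j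
  proof -
    have "R j \<in> borel_measurable borel" using pcl_R[OF j] unfolding pcl_def by simp
    from Lop_summable(2)[OF w this order_refl Bj0[OF j], of x] Rb[OF j]
    have 1: "\<bar>Lop w x (R j)\<bar> \<le> (Bj j / w ^ r) * P\<psi> * S\<phi>" by simp
    have sw: "sj j * w = real j / real r" using r0 w by (simp add: sj_def s_def)
    have "Bj j / w ^ r = \<omega> / ((sj j * w) ^ r * fact r)"
      by (simp add: Bj_def power_mult_distrib field_simps)
    also have "\<dots> \<le> \<omega> / ((1 / real r) ^ r * 1)"
    proof (rule divide_left_mono[OF _ om])
      have "(1 / real r) ^ r \<le> (sj j * w) ^ r"
        unfolding sw using j r0 by (intro power_mono divide_right_mono) auto
      moreover have "(1::real) \<le> fact r" by simp
      ultimately show "(1 / real r) ^ r * 1 \<le> (sj j * w) ^ r * fact r"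
        using sjpos[OF j] w by (intro mult_mono) auto
      show "0 < (sj j * w) ^ r * fact r * ((1 / real r) ^ r * 1)"
        using sjpos[OF j] w r0 by simp
    qed
    also have "\<dots> = real r ^ r * \<omega>" by (simp add: power_divide)
    finally have 2: "Bj j / w ^ r \<le> real r ^ r * \<omega>" .
    have "(Bj j / w ^ r) * P\<psi> * S\<phi> \<le> real r ^ r * \<omega> * P\<psi> * S\<phi>"
    proof -
      have S0: "S\<phi> \<ge> 0" using phi_bound[of 0] infsum_nonneg[of UNIV "\<lambda>k::int. \<bar>\<phi> (0 - of_int k)\<bar> * (1 + \<bar>0 - of_int k\<bar>) ^ r"]
        by force
      show ?thesis using 2 Ppsi_nonneg S0 by (intro mult_right_mono) auto
    qed
    with 1 show ?thesis by linarith
  qed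
  have S0: "S\<phi> \<ge> 0" using phi_bound[of 0] infsum_nonneg[of UNIV "\<lambda>k::int. \<bar>\<phi> (0 - of_int k)\<bar> * (1 + \<bar>0 - of_int k\<bar>) ^ r"]
    by force
  have "\<bar>\<Sum>j\<in>{1..r}. d j * Lop w x (R j)\<bar> \<le> (\<Sum>j\<in>{1..r}. real (r choose j) * (real r ^ r * \<omega> * P\<psi> * S\<phi>))"
  proof -
    have "\<bar>\<Sum>j\<in>{1..r}. d j * Lop w x (R j)\<bar> \<le> (\<Sum>j\<in>{1..r}. \<bar>d j * Lop w x (R j)\<bar>)" by (rule sum_abs)
    also have "\<dots> \<le> (\<Sum>j\<in>{1..r}. real (r choose j) * (real r ^ r * \<omega> * P\<psi> * S\<phi>))"
    proof (rule sum_mono)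
      fix j assume j: "j \<in> {1..r}"
      have "\<bar>d j\<bar> = real (r choose j)" by (simp add: d_def c_def abs_mult)
      then show "\<bar>d j * Lop w x (R j)\<bar> \<le> real (r choose j) * (real r ^ r * \<omega> * P\<psi> * S\<phi>)"
        using LR[OF j] by (simp add: abs_mult mult_left_mono)
    qed
    finally show ?thesis .
  qed
  also have "\<dots> = (\<Sum>j\<in>{1..r}. real (r choose j)) * (real r ^ r * \<omega> * P\<psi> * S\<phi>)"
    by (simp add: sum_distrib_right)
  also have "\<dots> \<le> 2 ^ r * (real r ^ r * \<omega> * P\<psi> * S\<phi>)"
  proof (rule mult_right_mono)
    have "(\<Sum>j\<in>{1..r}. real (r choose j)) \<le> (\<Sum>j\<le>r. real (r choose j))"
      by (rule sum_mono2) auto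
    also have "\<dots> = 2 ^ r" using choose_row_sum[of r] by (metis of_nat_numeral of_nat_power of_nat_sum)
    finally show "(\<Sum>j\<in>{1..r}. real (r choose j)) \<le> 2 ^ r" .
    show "0 \<le> real r ^ r * \<omega> * P\<psi> * S\<phi>" using om Ppsi_nonneg S0 by simp
  qed
  finally have sumb: "\<bar>\<Sum>j\<in>{1..r}. d j * Lop w x (R j)\<bar> \<le> 2 ^ r * (real r ^ r * \<omega> * P\<psi> * S\<phi>)" .
  have "\<bar>(-1) ^ r * (Lop w x e - e x)\<bar> \<le> \<omega> * P\<psi> * S\<phi> + \<omega>"
    using Le eb[of x] by (simp add: abs_mult)
  then show ?thesis unfolding diff using sumb by (simp add: algebra_simps)
qed

end


lemma fdiff_bound:
  assumes "\<And>y. \<bar>f y\<bar> \<le> Bf"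
  shows "\<bar>fdiff r t f y\<bar> \<le> (\<Sum>j=0..r. real (r choose j) * Bf)"
  unfolding fdiff_def
proof (rule order_trans[OF sum_abs], rule sum_mono)
  fix j assume "j \<in> {0..r}"
  have "\<bar>real (r choose j) * (-1) ^ (r - j) * f (y + real j * t)\<bar> = real (r choose j) * \<bar>f (y + real j * t)\<bar>"
    by (simp add: abs_mult)
  also have "\<dots> \<le> real (r choose j) * Bf" by (rule mult_left_mono[OF assms]) simp
  finally show "\<bar>real (r choose j) * (-1) ^ (r - j) * f (y + real j * t)\<bar> \<le> real (r choose j) * Bf" .
qed

lemma modsmooth_ge:
  assumes Bf: "\<And>y. \<bar>f y\<bar> \<le> Bf" and t: "\<bar>t\<bar> \<le> \<delta>"
  shows "\<bar>fdiff r t f y\<bar> \<le> modsmooth r f \<delta>"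
proof -
  define FB where "FB = (\<Sum>j=0..r. real (r choose j) * Bf)"
  have fb: "\<bar>fdiff r t' f y'\<bar> \<le> FB" for t' y' unfolding FB_def by (rule fdiff_bound[OF Bf])
  have sn: "sup_norm (fdiff r t' f) \<le> FB" for t'
    unfolding sup_norm_def by (rule cSUP_least) (auto intro: fb)
  have "\<bar>fdiff r t f y\<bar> \<le> sup_norm (fdiff r t f)"
    unfolding sup_norm_def by (rule cSUP_upper) (auto intro!: bdd_aboveI2[where M=FB] fb)
  also have "\<dots> \<le> modsmooth r f \<delta>"
    unfolding modsmooth_def by (rule cSUP_upper) (use t sn in \<open>auto intro!: bdd_aboveI2[where M=FB]\<close>)
  finally show ?thesis .
qed

theorem theorem3p1:
  fixes r :: nat and \<phi> \<psi> :: "real \<Rightarrow> real" and \<theta> :: real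
  assumes "r \<ge> 2"
    and "discrete_kernel \<phi>" and "continuous_kernel \<psi>"
    and "cond_i r \<phi>" and "cond_ii r \<phi> \<psi>"
    and "\<theta> > real r + 1" and "cond_Theta \<theta> \<phi>" and "cond_Theta \<theta> \<psi>"
  shows "\<exists>\<Lambda>>0. \<forall>f\<in>bucont. \<forall>w>0.
           bounded (range (\<lambda>x. durrmeyer \<phi> \<psi> w f x - f x)) \<and>
           sup_norm (\<lambda>x. durrmeyer \<phi> \<psi> w f x - f x) \<le> \<Lambda> * modsmooth r f (1 / w)"
proof -
  note r2 = assms(1) and dk = assms(2) and ck = assms(3) and ci = assms(4) and cii = assms(5)
    and th = assms(6) and Tphi = assms(7) and Tpsi = assms(8)
  have r0: "r > 0" using r2 by simp
  define \<alpha> where "\<alpha> = \<theta> - real r"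
  have a1: "\<alpha> > 1" using th by (simp add: \<alpha>_def)
  have tr: "\<theta> > real r" using th by simp
  obtain B\<phi> where B\<phi>: "\<And>v. \<bar>\<phi> v\<bar> \<le> B\<phi>"
    using dk unfolding discrete_kernel_def bounded_iff by auto
  have phisum1: "((\<lambda>k::int. \<phi> (u - of_int k)) has_sum 1) UNIV" for u
    using dk unfolding discrete_kernel_def by auto
  have psi_int1: "integrable lborel \<psi>" and psi1: "(LINT u|lborel. \<psi> u) = 1"
    using ck unfolding continuous_kernel_def by auto
  have psi_borel: "\<psi> \<in> borel_measurable borel"
    using borel_measurable_integrable[OF psi_int1] by simp
  obtain C\<phi> where C\<phi>: "C\<phi> \<ge> 0" "\<And>v. \<bar>\<phi> v\<bar> * (1 + \<bar>v\<bar>) ^ r \<le> C\<phi> * (1 + \<bar>v\<bar>) powr (-\<alpha>)"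
    by (rule theta_global[OF Tphi tr B\<phi>]) (auto simp: \<alpha>_def)
  obtain Z where Z: "Z \<ge> 0" "\<And>u. (\<lambda>k::int. (1 + \<bar>u - real_of_int k\<bar>) powr (-\<alpha>)) summable_on UNIV"
    "\<And>u. (\<Sum>\<^sub>\<infinity>k::int. (1 + \<bar>u - real_of_int k\<bar>) powr (-\<alpha>)) \<le> Z"
    by (rule Zsum[OF a1]) auto
  have phi_summ: "(\<lambda>k::int. \<bar>\<phi> (u - of_int k)\<bar> * (1 + \<bar>u - of_int k\<bar>) ^ r) summable_on UNIV" for u
  proof (rule summable_on_comparison_test)
    show "(\<lambda>k::int. C\<phi> * (1 + \<bar>u - real_of_int k\<bar>) powr (-\<alpha>)) summable_on UNIV"
      by (intro summable_on_cmult_right Z(2))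
  qed (use C\<phi> in auto)
  have phi_bound: "(\<Sum>\<^sub>\<infinity>k::int. \<bar>\<phi> (u - of_int k)\<bar> * (1 + \<bar>u - of_int k\<bar>) ^ r) \<le> C\<phi> * Z" for u
  proof -
    have "(\<Sum>\<^sub>\<infinity>k::int. \<bar>\<phi> (u - of_int k)\<bar> * (1 + \<bar>u - of_int k\<bar>) ^ r)
        \<le> (\<Sum>\<^sub>\<infinity>k::int. C\<phi> * (1 + \<bar>u - real_of_int k\<bar>) powr (-\<alpha>))"
      by (rule infsum_mono[OF phi_summ]) (use C\<phi> Z in \<open>auto intro: summable_on_cmult_right\<close>)
    also have "\<dots> = C\<phi> * (\<Sum>\<^sub>\<infinity>k::int. (1 + \<bar>u - real_of_int k\<bar>) powr (-\<alpha>))"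
      by (rule infsum_cmult_right')
    also have "\<dots> \<le> C\<phi> * Z" by (intro mult_left_mono Z(3) C\<phi>(1))
    finally show ?thesis .
  qed
  obtain M C\<psi> where M: "M \<ge> 1" "C\<psi> \<ge> 0"
    "\<And>v. \<bar>v\<bar> > M \<Longrightarrow> \<bar>\<psi> v\<bar> * (1 + \<bar>v\<bar>) ^ r \<le> C\<psi> * (1 + \<bar>v\<bar>) powr (-\<alpha>)"
    by (rule theta_tail[OF Tpsi tr]) (auto simp: \<alpha>_def)
  have psi_int: "integrable lborel (\<lambda>v. \<bar>\<psi> v\<bar> * (1 + \<bar>v\<bar>) ^ r)"
  proof (rule Bochner_Integration.integrable_bound)
    show "integrable lborel (\<lambda>v. (1 + M) ^ r * \<bar>\<psi> v\<bar> + C\<psi> * (1 + \<bar>v\<bar>) powr (-\<alpha>))"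
      using psi_int1 E_integrable[OF a1] by auto
    show "(\<lambda>v. \<bar>\<psi> v\<bar> * (1 + \<bar>v\<bar>) ^ r) \<in> borel_measurable lborel"
      using psi_borel by measurable
    show "AE v in lborel. norm (\<bar>\<psi> v\<bar> * (1 + \<bar>v\<bar>) ^ r) \<le> norm ((1 + M) ^ r * \<bar>\<psi> v\<bar> + C\<psi> * (1 + \<bar>v\<bar>) powr (-\<alpha>))"
    proof (rule AE_I2)
      fix v :: real
      have nn: "0 \<le> (1 + M) ^ r * \<bar>\<psi> v\<bar>" "0 \<le> C\<psi> * (1 + \<bar>v\<bar>) powr (-\<alpha>)" using M by auto
      have "\<bar>\<psi> v\<bar> * (1 + \<bar>v\<bar>) ^ r \<le> (1 + M) ^ r * \<bar>\<psi> v\<bar> + C\<psi> * (1 + \<bar>v\<bar>) powr (-\<alpha>)"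
      proof (cases "\<bar>v\<bar> > M")
        case True then show ?thesis using M(3)[of v] nn by linarith
      next
        case False
        then have "(1 + \<bar>v\<bar>) ^ r \<le> (1 + M) ^ r" by (intro power_mono) auto
        then have "\<bar>\<psi> v\<bar> * (1 + \<bar>v\<bar>) ^ r \<le> \<bar>\<psi> v\<bar> * (1 + M) ^ r" by (rule mult_left_mono) simp
        then show ?thesis using nn by (simp add: mult.commute)
      qed
      then show "norm (\<bar>\<psi> v\<bar> * (1 + \<bar>v\<bar>) ^ r) \<le> norm ((1 + M) ^ r * \<bar>\<psi> v\<bar> + C\<psi> * (1 + \<bar>v\<bar>) powr (-\<alpha>))"
        using nn by simp
    qed
  qed
  interpret K: KS \<phi> \<psi> r "C\<phi> * Z"
  proof
    show "\<And>u. (\<lambda>k::int. \<bar>\<phi> (u - of_int k)\<bar> * (1 + \<bar>u - of_int k\<bar>) ^ r) summable_on UNIV" by (rule phi_summ)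
    show "\<And>u. (\<Sum>\<^sub>\<infinity>k::int. \<bar>\<phi> (u - of_int k)\<bar> * (1 + \<bar>u - of_int k\<bar>) ^ r) \<le> C\<phi> * Z" by (rule phi_bound)
  qed (rule psi_int, rule psi_borel)
  have dm: "disc_moment \<phi> j u = disc_moment_const \<phi> j" if "j \<le> r" for j u
  proof (cases "j = 0")
    case True
    have "disc_moment \<phi> 0 u = 1" unfolding disc_moment_def using phisum1[of u] by (simp add: infsumI)
    then show ?thesis using True by (simp add: disc_moment_const_def)
  next
    case False
    then have "j \<in> {1..r}" using that by auto
    then have "disc_moment \<phi> j u = disc_moment \<phi> j 0" using ci unfolding cond_i_def by blast
    moreover have "disc_moment_const \<phi> j = disc_moment \<phi> j 0" using False by (simp add: disc_moment_const_def)
    ultimately show ?thesis by simp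
  qed
  have c0: "cont_moment \<psi> 0 = 1" unfolding cont_moment_def using psi1 by simp
  define \<Lambda> where "\<Lambda> = 1 + K.P\<psi> * (C\<phi> * Z) + 2 ^ r * real r ^ r * K.P\<psi> * (C\<phi> * Z)"
  have \<Lambda>0: "\<Lambda> > 0" unfolding \<Lambda>_def using K.Ppsi_nonneg C\<phi>(1) Z(1) by (simp add: add_pos_nonneg)
  show ?thesis
  proof (intro exI[of _ \<Lambda>] conjI \<Lambda>0 ballI allI impI)
    fix f w assume f: "f \<in> bucont" and w: "(w::real) > 0"
    have fc: "continuous_on UNIV f"
      using f unfolding bucont_def by (auto intro: uniformly_continuous_imp_continuous)
    obtain Bf where Bf: "\<And>y. \<bar>f y\<bar> \<le> Bf"
      using f unfolding bucont_def bounded_iff by auto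
    define \<omega> where "\<omega> = modsmooth r f (1 / w)"
    have h\<omega>: "\<bar>fdiff r t f y\<bar> \<le> \<omega>" if "0 \<le> t" "t \<le> 1 / w" for t y
      unfolding \<omega>_def by (rule modsmooth_ge[OF Bf]) (use that in auto)
    have om: "\<omega> \<ge> 0" using h\<omega>[of 0 0] w by simp
    have pt: "\<bar>durrmeyer \<phi> \<psi> w f x - f x\<bar> \<le> \<Lambda> * \<omega>" for x
      unfolding K.durrmeyer_Lop[OF w] \<Lambda>_def
      by (rule K.main_est[OF w r0 fc om h\<omega> dm cii c0]) auto
    show "bounded (range (\<lambda>x. durrmeyer \<phi> \<psi> w f x - f x))"
      unfolding bounded_iff using pt by auto
    show "sup_norm (\<lambda>x. durrmeyer \<phi> \<psi> w f x - f x) \<le> \<Lambda> * modsmooth r f (1 / w)"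
      unfolding sup_norm_def \<omega>_def[symmetric] by (rule cSUP_least) (use pt in auto)
  qed
qed


end
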